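(* For every $(A,\lambda,v)\in\mathcal W$, \[ \frac{NJ_{\pi}(A,\lambda,v)}{NJ_{\pi_2}(A,\lambda,v)}=\frac12\,|\det(A_{\lambda,v})|^2 . \] In particular this quotient is invariant under the action $U\cdot(A,\lambda,v)=(UAU^{-1},\lambda,Uv)$ of the unitary group.
   Context: $\mathcal V=\{(A,\lambda,v)\in\mathbb C^{n\times n}\times\mathbb C\times\mathbb P(\mathbb C^n):(\lambda I_n-A)v=0\}$, a smooth submanifold with the Riemannian metric induced from the product of the Euclidean (Frobenius) metric on $\mathbb C^{n\times n}\times\mathbb C$ and the Fubini–Study metric on $\mathbb P(\mathbb C^n)$. $\pi(A,\lambda,v)=A$, $\pi_2(A,\lambda,v)=v$. $A_{\lambda,v}=\Pi_{v^\perp}(\lambda I_n-A)|_{v^\perp}$; $\mathcal W=\{(A,\lambda,v)\in\mathcal V:A_{\lambda,v}\text{ invertible}\}$. $NJ_f$ denotes the normal Jacobian of $f$: the absolute value of the determinant of $Df$ restricted to the orthogonal complement of its kernel. *)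

theory Defs
  imports "HOL-Analysis.Analysis"
begin

definition det_nat :: "nat \<Rightarrow> (nat \<Rightarrow> nat \<Rightarrow> 'a::comm_ring_1) \<Rightarrow> 'a" where
  "det_nat k M = (\<Sum>p | p permutes {..<k}. of_int (sign p) * (\<Prod>i<k. M i (p i)))"

definition cinner :: "complex^'n \<Rightarrow> complex^'n \<Rightarrow> complex" where
  "cinner x y = (\<Sum>i\<in>UNIV. x$i * cnj (y$i))"

definition perp :: "complex^'n \<Rightarrow> (complex^'n) set" where
  "perp v = {x. cinner x v = 0}"

definition proj_perp :: "complex^'n \<Rightarrow> complex^'n \<Rightarrow> complex^'n" where
  "proj_perp v x = x - (cinner x v / cinner v v) *s v"

definition cadjoint :: "complex^'n^'n \<Rightarrow> complex^'n^'n" where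
  "cadjoint U = (\<chi> i j. cnj (U$j$i))"

definition unitary :: "complex^'n^'n \<Rightarrow> bool" where
  "unitary U \<longleftrightarrow> U ** cadjoint U = mat 1 \<and> cadjoint U ** U = mat 1"

definition c_onb :: "(complex^'n) set \<Rightarrow> (complex^'n) list \<Rightarrow> bool" where
  "c_onb S us \<longleftrightarrow>
     (\<forall>i<length us. \<forall>j<length us. cinner (us!i) (us!j) = (if i = j then 1 else 0)) \<and>
     set us \<subseteq> S \<and>
     (\<forall>x\<in>S. \<exists>c. x = (\<Sum>i<length us. c i *s us!i))"

text \<open>complex determinant of a complex-linear operator B on a subspace S,
  computed in an orthonormal basis of S (the absolute value is basis independent)\<close>
definition det_on :: "(complex^'n \<Rightarrow> complex^'n) \<Rightarrow> (complex^'n) set \<Rightarrow> complex" where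
  "det_on B S = (let us = (SOME us. c_onb S us) in
      det_nat (length us) (\<lambda>i j. cinner (B (us!j)) (us!i)))"

text \<open>A_{lambda,v} = Pi_{v^perp} (lambda I - A) restricted to v^perp\<close>
definition A_lv :: "complex^'n^'n \<Rightarrow> complex \<Rightarrow> complex^'n \<Rightarrow> complex^'n \<Rightarrow> complex^'n" where
  "A_lv A l v x = proj_perp v ((mat l - A) *v x)"

definition r_onb :: "'a::real_inner set \<Rightarrow> 'a list \<Rightarrow> bool" where
  "r_onb S bs \<longleftrightarrow>
     (\<forall>i<length bs. \<forall>j<length bs. bs!i \<bullet> bs!j = (if i = j then 1 else 0)) \<and>
     set bs \<subseteq> S \<and>
     (\<forall>x\<in>S. \<exists>c. x = (\<Sum>i<length bs. c i *\<^sub>R bs!i))"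

text \<open>NJ_L on the tangent space S: absolute value of the determinant of L restricted to
  the orthogonal complement (inside S) of its kernel, computed via orthonormal bases,
  i.e. the square root of the Gram determinant of the images of an orthonormal basis.\<close>
definition normal_jacobian :: "('a::real_inner \<Rightarrow> 'b::real_inner) \<Rightarrow> 'a set \<Rightarrow> real" where
  "normal_jacobian L S =
     (let H = {x\<in>S. \<forall>y\<in>S. L y = 0 \<longrightarrow> x \<bullet> y = 0};
          bs = (SOME bs. r_onb H bs)
      in sqrt (det_nat (length bs) (\<lambda>i j. L (bs!i) \<bullet> L (bs!j))))"

text \<open>A point (A, lambda, [v]) of V, represented with a unit representative v.\<close>
definition in_V :: "complex^'n^'n \<Rightarrow> complex \<Rightarrow> complex^'n \<Rightarrow> bool" where
  "in_V A l v \<longleftrightarrow> norm v = 1 \<and> (mat l - A) *v v = 0"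

definition in_W :: "complex^'n^'n \<Rightarrow> complex \<Rightarrow> complex^'n \<Rightarrow> bool" where
  "in_W A l v \<longleftrightarrow> in_V A l v \<and> bij_betw (A_lv A l v) (perp v) (perp v)"

text \<open>Tangent space of V at (A, lambda, [v]) (v unit), with T_[v] P(C^n) identified
  isometrically (Fubini--Study) with v^perp carrying the real part of the Hermitian product.
  The real inner product on the product space is Frobenius + Euclidean + Fubini--Study.\<close>
definition tangent_V :: "complex^'n^'n \<Rightarrow> complex \<Rightarrow> complex^'n
     \<Rightarrow> ((complex^'n^'n) \<times> complex \<times> (complex^'n)) set" where
  "tangent_V A l v = {(dA, dl, dw). cinner dw v = 0 \<and>
        (mat dl - dA) *v v + (mat l - A) *v dw = 0}"

definition NJ_pi :: "complex^'n^'n \<Rightarrow> complex \<Rightarrow> complex^'n \<Rightarrow> real" where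
  "NJ_pi A l v = normal_jacobian (\<lambda>(dA, dl, dw). dA) (tangent_V A l v)"

definition NJ_pi2 :: "complex^'n^'n \<Rightarrow> complex \<Rightarrow> complex^'n \<Rightarrow> real" where
  "NJ_pi2 A l v = normal_jacobian (\<lambda>(dA, dl, dw). dw) (tangent_V A l v)"

end

theory Submission
  imports Defs "Jordan_Normal_Form.Determinant"
begin

lemma det_nat_det: "det_nat k M = det (Matrix.mat k k (\<lambda>(i,j). M i j))"
proof -
  have "det (Matrix.mat k k (\<lambda>(i,j). M i j)) =
     (\<Sum>p\<in>{p. p permutes {0..<k}}. signof p * (\<Prod>i = 0..<k. Matrix.mat k k (\<lambda>(i,j). M i j) $$ (i, p i)))"
    by (rule det_def') auto
  also have "\<dots> = det_nat k M"
    unfolding det_nat_def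
  proof (rule sum.cong)
    show "{p. p permutes {0..<k}} = {p. p permutes {..<k}}" by (simp add: lessThan_atLeast0)
  next
    fix p assume "p \<in> {p. p permutes {..<k}}"
    hence p: "p permutes {..<k}" by simp
    have "(\<Prod>i = 0..<k. Matrix.mat k k (\<lambda>(i,j). M i j) $$ (i, p i)) = (\<Prod>i<k. M i (p i))"
    proof (rule prod.cong)
      fix i assume "i \<in> {..<k}"
      moreover hence "p i < k" using permutes_in_image[OF p] by auto
      ultimately show "Matrix.mat k k (\<lambda>(i,j). M i j) $$ (i, p i) = M i (p i)" by simp
    qed (simp add: lessThan_atLeast0)
    thus "signof p * (\<Prod>i = 0..<k. Matrix.mat k k (\<lambda>(i,j). M i j) $$ (i, p i)) = of_int (sign p) * (\<Prod>i<k. M i (p i))"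
      by simp
  qed
  finally show ?thesis by simp
qed

definition gram :: "'a::real_inner list \<Rightarrow> real mat" where
  "gram xs = Matrix.mat (length xs) (length xs) (\<lambda>(i,j). inner (xs!i) (xs!j))"

lemma gram_carrier[simp]: "gram xs \<in> carrier_mat (length xs) (length xs)"
  by (simp add: gram_def)

definition onl :: "'a::real_inner list \<Rightarrow> bool" where
  "onl xs \<longleftrightarrow> (\<forall>i<length xs. \<forall>j<length xs. inner (xs!i) (xs!j) = (if i = j then 1 else 0))"

lemma gram_onl: "onl xs \<Longrightarrow> gram xs = 1\<^sub>m (length xs)"
  unfolding onl_def gram_def by (intro eq_matI) auto

definition lfree :: "'a::real_vector list \<Rightarrow> bool" where
  "lfree xs \<longleftrightarrow> (\<forall>a. (\<Sum>i<length xs. a i *\<^sub>R xs!i) = 0 \<longrightarrow> (\<forall>i<length xs. a i = 0))"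

lemma lfreeD: "lfree xs \<Longrightarrow> (\<Sum>i<length xs. a i *\<^sub>R xs!i) = 0 \<Longrightarrow> i < length xs \<Longrightarrow> a i = 0"
  unfolding lfree_def by blast

lemma onl_lfree: assumes "onl xs" shows "lfree xs"
  unfolding lfree_def
proof (intro allI impI)
  fix a k assume s: "(\<Sum>i<length xs. a i *\<^sub>R xs!i) = 0" and k: "k < length xs"
  have "0 = inner (\<Sum>i<length xs. a i *\<^sub>R xs!i) (xs!k)" using s by simp
  also have "\<dots> = (\<Sum>i<length xs. a i * inner (xs!i) (xs!k))" by (simp add: inner_sum_left)
  also have "\<dots> = (\<Sum>i<length xs. if i = k then a k else 0)"
    using assms k unfolding onl_def by (intro sum.cong) auto
  also have "\<dots> = a k" using k by simp
  finally show "a k = 0" by simp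
qed

lemma mult_mat_entry:
  assumes "A \<in> carrier_mat a b" "B \<in> carrier_mat b c" "i < a" "j < c"
  shows "(A * B) $$ (i,j) = (\<Sum>k<b. A $$ (i,k) * B $$ (k,j))"
  using assms by (simp add: scalar_prod_def lessThan_atLeast0)

lemma mult_mat_vec_entry:
  assumes "A \<in> carrier_mat a b" "w \<in> carrier_vec b" "i < a"
  shows "(A *\<^sub>v w) $ i = (\<Sum>k<b. A $$ (i,k) * w $ k)"
  using assms by (simp add: scalar_prod_def lessThan_atLeast0)

lemma gram_lfree: assumes "det (gram xs) \<noteq> 0" shows "lfree xs"
  unfolding lfree_def
proof (intro allI impI)
  fix a k assume s: "(\<Sum>i<length xs. a i *\<^sub>R xs!i) = 0" and k: "k < length xs"
  let ?n = "length xs"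
  define w where "w = Matrix.vec ?n a"
  have "gram xs *\<^sub>v w = 0\<^sub>v ?n"
  proof (intro eq_vecI)
    fix j assume j: "j < dim_vec (0\<^sub>v ?n :: real Matrix.vec)"
    hence j: "j < ?n" by simp
    have "(gram xs *\<^sub>v w) $ j = (\<Sum>i<?n. inner (xs!j) (xs!i) * a i)"
      using j by (subst mult_mat_vec_entry[of _ ?n ?n]) (auto simp: gram_def w_def)
    also have "\<dots> = inner (xs!j) (\<Sum>i<?n. a i *\<^sub>R xs!i)"
      by (simp add: inner_sum_right mult.commute)
    also have "\<dots> = 0" using s by simp
    finally show "(gram xs *\<^sub>v w) $ j = 0\<^sub>v ?n $ j" using j by simp
  qed (simp add: gram_def)
  moreover have "w \<in> carrier_vec ?n" by (simp add: w_def)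
  ultimately have "w = 0\<^sub>v ?n"
    using det_0_iff_vec_prod_zero_field[OF gram_carrier[of xs]] assms by auto
  thus "a k = 0" using k unfolding w_def by (metis index_vec index_zero_vec(1))
qed

lemma lfree_map: assumes "linear L" "lfree (map L xs)" shows "lfree xs"
  unfolding lfree_def
proof (intro allI impI)
  fix a k assume s: "(\<Sum>i<length xs. a i *\<^sub>R xs!i) = 0" and k: "k < length xs"
  have "(\<Sum>i<length xs. a i *\<^sub>R (map L xs)!i) = L (\<Sum>i<length xs. a i *\<^sub>R xs!i)"
    using assms(1) by (simp add: linear_sum linear_scale)
  also have "\<dots> = 0" using s assms(1) linear_0 by auto
  finally show "a k = 0" using assms(2) k unfolding lfree_def by auto
qed

lemma sum_set_distinct: "distinct xs \<Longrightarrow> sum f (set xs) = (\<Sum>i<length xs. f (xs!i))"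
  by (simp add: sum.distinct_set_conv_list sum_list_sum_nth lessThan_atLeast0)

lemma lfree_distinct: assumes "lfree xs" shows "distinct xs"
proof (rule ccontr)
  assume "\<not> distinct xs"
  then obtain i j where ij: "i < length xs" "j < length xs" "i \<noteq> j" "xs!i = xs!j"
    by (metis distinct_conv_nth)
  define a where "a = (\<lambda>k. if k = i then (1::real) else if k = j then -1 else 0)"
  have "(\<Sum>k<length xs. a k *\<^sub>R xs!k) = (\<Sum>k\<in>{i,j}. a k *\<^sub>R xs!k)"
    using ij by (intro sum.mono_neutral_right) (auto simp: a_def)
  also have "\<dots> = 0" using ij by (simp add: a_def)
  finally have "a i = 0" using assms ij unfolding lfree_def by blast
  thus False by (simp add: a_def)
qed

lemma lfree_indep: assumes "lfree xs" shows "independent (set xs)"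
proof (rule ccontr)
  have d: "distinct xs" using lfree_distinct[OF assms] .
  assume "\<not> independent (set xs)"
  then obtain c v where s: "(\<Sum>v\<in>set xs. c v *\<^sub>R v) = 0" and v: "v \<in> set xs" and nz: "c v \<noteq> 0"
    using real_vector.dependent_finite[of "set xs"] by auto
  have "(\<Sum>v\<in>set xs. c v *\<^sub>R v) = (\<Sum>i<length xs. c (xs!i) *\<^sub>R xs!i)"
    by (rule sum_set_distinct[OF d])
  hence "(\<Sum>i<length xs. c (xs!i) *\<^sub>R xs!i) = 0" using s by simp
  hence z: "\<forall>i<length xs. c (xs!i) = 0" using lfreeD[OF assms, of "\<lambda>i. c (xs!i)"] by blast
  obtain i where "i < length xs" "xs!i = v" using v in_set_conv_nth by metis
  thus False using z nz by auto
qed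

lemma lfree_dim:
  assumes "lfree xs" "set xs \<subseteq> H" "H \<subseteq> span (set xs)"
  shows "dim H = length xs"
  using dim_unique[OF assms(2,3) lfree_indep[OF assms(1)]]
    distinct_card[OF lfree_distinct[OF assms(1)]] by simp

definition spans :: "'a::real_vector set \<Rightarrow> 'a list \<Rightarrow> bool" where
  "spans H xs \<longleftrightarrow> (\<forall>x\<in>H. \<exists>c. x = (\<Sum>i<length xs. c i *\<^sub>R xs!i))"

lemma r_onb_alt: "r_onb H bs \<longleftrightarrow> onl bs \<and> set bs \<subseteq> H \<and> spans H bs"
  unfolding r_onb_def onl_def spans_def by blast

lemma spans_span: "spans H xs \<Longrightarrow> H \<subseteq> span (set xs)"
proof
  fix x assume "spans H xs" "x \<in> H"
  then obtain c where "x = (\<Sum>i<length xs. c i *\<^sub>R xs!i)" unfolding spans_def by blast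
  moreover have "(\<Sum>i<length xs. c i *\<^sub>R xs!i) \<in> span (set xs)"
    by (intro span_sum span_scale span_base) auto
  ultimately show "x \<in> span (set xs)" by simp
qed

lemma r_onb_dim: "r_onb H bs \<Longrightarrow> dim H = length bs"
  unfolding r_onb_alt using lfree_dim onl_lfree spans_span by blast

lemma onl_coeff:
  assumes "onl bs" "x = (\<Sum>i<length bs. c i *\<^sub>R bs!i)" "k < length bs"
  shows "c k = inner x (bs!k)"
proof -
  have "inner x (bs!k) = (\<Sum>i<length bs. c i * inner (bs!i) (bs!k))"
    using assms(2) by (simp add: inner_sum_left)
  also have "\<dots> = (\<Sum>i<length bs. if i = k then c k else 0)"
    using assms(1,3) unfolding onl_def by (intro sum.cong) auto
  also have "\<dots> = c k" using assms(3) by simp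
  finally show ?thesis by simp
qed

lemma onl_expand:
  assumes "onl bs" "spans H bs" "x \<in> H"
  shows "x = (\<Sum>i<length bs. inner x (bs!i) *\<^sub>R bs!i)"
proof -
  obtain c where c: "x = (\<Sum>i<length bs. c i *\<^sub>R bs!i)" using assms(2,3) unfolding spans_def by blast
  have ci: "\<And>i. i < length bs \<Longrightarrow> c i = inner x (bs!i)" using onl_coeff[OF assms(1) c] .
  have "(\<Sum>i<length bs. c i *\<^sub>R bs!i) = (\<Sum>i<length bs. inner x (bs!i) *\<^sub>R bs!i)"
    by (rule sum.cong) (auto simp: ci)
  thus ?thesis using c by metis
qed

lemma r_onb_exists:
  fixes H :: "'a::euclidean_space set"
  assumes "subspace H" shows "\<exists>bs. r_onb H bs"
proof -
  obtain B where B: "B \<subseteq> H" "pairwise real_inner_class.orthogonal B" "\<And>x. x \<in> B \<Longrightarrow> norm x = 1"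
    "independent B" "card B = dim H" "span B = H"
    using orthonormal_basis_subspace[OF assms] by blast
  have fB: "finite B" using B(4) by (rule independent_imp_finite)
  obtain xs where xs: "set xs = B" "distinct xs" using finite_distinct_list[OF fB] by blast
  have "onl xs" unfolding onl_def
  proof (intro allI impI)
    fix i j assume ij: "i < length xs" "j < length xs"
    have inB: "xs!i \<in> B" "xs!j \<in> B" using xs(1) ij nth_mem by blast+
    show "inner (xs!i) (xs!j) = (if i = j then 1 else 0)"
    proof (cases "i = j")
      case True
      have "norm (xs!i) = 1" using B(3) inB(1) by blast
      hence "inner (xs!i) (xs!i) = 1" by (simp add: dot_square_norm)
      thus ?thesis using True by simp
    next
      case False
      hence "xs!i \<noteq> xs!j" using xs(2) ij nth_eq_iff_index_eq by blast
      hence "inner (xs!i) (xs!j) = 0" using B(2) inB unfolding pairwise_def real_inner_class.orthogonal_def by blast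
      thus ?thesis using False by simp
    qed
  qed
  moreover have "spans H xs" unfolding spans_def
  proof
    fix x assume "x \<in> H"
    hence "x \<in> span B" using B(6) by simp
    then obtain u where u: "x = (\<Sum>v\<in>B. u v *\<^sub>R v)" using span_finite[OF fB] by blast
    have "(\<Sum>v\<in>B. u v *\<^sub>R v) = (\<Sum>i<length xs. u (xs!i) *\<^sub>R xs!i)"
      unfolding xs(1)[symmetric] by (rule sum_set_distinct[OF xs(2)])
    hence "x = (\<Sum>i<length xs. u (xs!i) *\<^sub>R xs!i)" using u by simp
    thus "\<exists>c. x = (\<Sum>i<length xs. c i *\<^sub>R xs!i)" by (intro exI[of _ "\<lambda>i. u (xs!i)"])
  qed
  moreover have "set xs \<subseteq> H" using B(1) xs(1) by simp
  ultimately show ?thesis unfolding r_onb_alt by blast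
qed

lemma gram_change:
  fixes L :: "'a::real_inner \<Rightarrow> 'b::real_inner"
  assumes "onl bs" "length cs = length bs"
    and exp: "\<And>j. j < length cs \<Longrightarrow> cs!j = (\<Sum>i<length bs. inner (cs!j) (bs!i) *\<^sub>R bs!i)"
    and L: "linear L"
  shows "gram (map L cs) = transpose_mat (Matrix.mat (length bs) (length bs) (\<lambda>(i,j). inner (cs!j) (bs!i)))
      * gram (map L bs) * Matrix.mat (length bs) (length bs) (\<lambda>(i,j). inner (cs!j) (bs!i))"
    (is "_ = transpose_mat ?C * ?G * ?C")
proof (rule eq_matI)
  let ?m = "length bs"
  have Cc: "?C \<in> carrier_mat ?m ?m" by simp
  have Gc: "?G \<in> carrier_mat ?m ?m" using gram_carrier[of "map L bs"] by simp
  have CTc: "transpose_mat ?C \<in> carrier_mat ?m ?m" by simp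
  have CG: "transpose_mat ?C * ?G \<in> carrier_mat ?m ?m" using mult_carrier_mat[OF CTc Gc] .
  fix j k assume j: "j < dim_row (transpose_mat ?C * ?G * ?C)" and k: "k < dim_col (transpose_mat ?C * ?G * ?C)"
  hence j: "j < ?m" and k: "k < ?m" by auto
  have Lc: "\<And>j. j < ?m \<Longrightarrow> L (cs!j) = (\<Sum>i<?m. inner (cs!j) (bs!i) *\<^sub>R L (bs!i))"
  proof -
    fix j assume "j < ?m"
    hence "L (cs!j) = L (\<Sum>i<?m. inner (cs!j) (bs!i) *\<^sub>R bs!i)" using exp assms(2) by metis
    also have "\<dots> = (\<Sum>i<?m. inner (cs!j) (bs!i) *\<^sub>R L (bs!i))"
      using L by (simp add: linear_sum linear_scale)
    finally show "L (cs!j) = (\<Sum>i<?m. inner (cs!j) (bs!i) *\<^sub>R L (bs!i))" .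
  qed
  have "gram (map L cs) $$ (j,k) = inner (L (cs!j)) (L (cs!k))"
    using j k assms(2) by (simp add: gram_def)
  also have "\<dots> = (\<Sum>i'<?m. (\<Sum>i<?m. inner (cs!j) (bs!i) * inner (L (bs!i)) (L (bs!i'))) * inner (cs!k) (bs!i'))"
    unfolding Lc[OF j] Lc[OF k]
    apply (simp add: inner_sum_left inner_sum_right sum_distrib_left sum_distrib_right mult.assoc mult.left_commute)
    apply (intro sum.cong refl)
    by (simp add: mult_ac)
  also have "\<dots> = (transpose_mat ?C * ?G * ?C) $$ (j,k)"
    apply (subst mult_mat_entry[OF CG Cc j k])
    apply (rule sum.cong, simp)
    apply (subst mult_mat_entry[OF CTc Gc j], simp)
    apply (auto simp: gram_def j k intro!: sum.cong)
    done
  finally show "gram (map L cs) $$ (j,k) = (transpose_mat ?C * ?G * ?C) $$ (j,k)" .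
qed (auto simp: gram_def assms(2))

lemma normal_jacobian_gram:
  "normal_jacobian L S = (let H = {x\<in>S. \<forall>y\<in>S. L y = 0 \<longrightarrow> inner x y = 0}; bs = (SOME bs. r_onb H bs)
      in sqrt (det (gram (map L bs))))"
  unfolding normal_jacobian_def det_nat_det Let_def gram_def
  by (intro arg_cong[where f=sqrt] arg_cong[where f=det] eq_matI) auto

lemma NJ_formula:
  fixes L :: "'a::euclidean_space \<Rightarrow> 'b::real_inner"
  assumes L: "linear L" and S: "subspace S"
  and cs: "set cs \<subseteq> {x\<in>S. \<forall>y\<in>S. L y = 0 \<longrightarrow> inner x y = 0}"
  and sp: "{x\<in>S. \<forall>y\<in>S. L y = 0 \<longrightarrow> inner x y = 0} \<subseteq> span (set cs)"
  and lf: "lfree cs"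
  shows "det (gram cs) > 0 \<and> normal_jacobian L S = sqrt (det (gram (map L cs)) / det (gram cs))"
proof -
  define H where "H = {x\<in>S. \<forall>y\<in>S. L y = 0 \<longrightarrow> inner x y = 0}"
  have sH: "subspace H" unfolding subspace_def H_def
  proof (intro conjI ballI allI)
    show "0 \<in> {x \<in> S. \<forall>y\<in>S. L y = 0 \<longrightarrow> inner x y = 0}" using S subspace_0 by auto
  next
    fix x y assume "x \<in> {x \<in> S. \<forall>y\<in>S. L y = 0 \<longrightarrow> inner x y = 0}" "y \<in> {x \<in> S. \<forall>y\<in>S. L y = 0 \<longrightarrow> inner x y = 0}"
    thus "x + y \<in> {x \<in> S. \<forall>y\<in>S. L y = 0 \<longrightarrow> inner x y = 0}" using S subspace_add by (auto simp: inner_add_left)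
  next
    fix c :: real and x assume "x \<in> {x \<in> S. \<forall>y\<in>S. L y = 0 \<longrightarrow> inner x y = 0}"
    thus "c *\<^sub>R x \<in> {x \<in> S. \<forall>y\<in>S. L y = 0 \<longrightarrow> inner x y = 0}" using S subspace_scale by auto
  qed
  define bs where "bs = (SOME bs. r_onb H bs)"
  have rb: "r_onb H bs" unfolding bs_def using r_onb_exists[OF sH] by (rule someI_ex)
  have onb: "onl bs" "set bs \<subseteq> H" "spans H bs" using rb unfolding r_onb_alt by auto
  have len: "length cs = length bs"
    using lfree_dim[OF lf cs[folded H_def] sp[folded H_def]] r_onb_dim[OF rb] by simp
  let ?m = "length bs"
  have exp: "\<And>j. j < length cs \<Longrightarrow> cs!j = (\<Sum>i<length bs. inner (cs!j) (bs!i) *\<^sub>R bs!i)"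
    using onl_expand[OF onb(1) onb(3)] cs[folded H_def] nth_mem by blast
  define C where "C = Matrix.mat ?m ?m (\<lambda>(i,j). inner (cs!j) (bs!i))"
  have Cc: "C \<in> carrier_mat ?m ?m" by (simp add: C_def)
  have gL: "gram (map L cs) = transpose_mat C * gram (map L bs) * C"
    unfolding C_def by (rule gram_change[OF onb(1) len exp L])
  have gI: "gram (map id cs) = transpose_mat C * gram (map id bs) * C"
    unfolding C_def by (rule gram_change[OF onb(1) len exp linear_id])
  have gbs: "gram bs = 1\<^sub>m ?m" using gram_onl[OF onb(1)] .
  have dcs: "det (gram cs) = det C * det C"
  proof -
    have "transpose_mat C * 1\<^sub>m ?m = transpose_mat C" using Cc by (simp add: right_mult_one_mat)
    hence "gram cs = transpose_mat C * C" using gI unfolding gbs list.map_id by simp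
    thus ?thesis using Cc by (simp add: det_mult[of _ ?m] det_transpose[OF Cc])
  qed
  have Gc: "gram (map L bs) \<in> carrier_mat ?m ?m" using gram_carrier[of "map L bs"] by simp
  have dL: "det (gram (map L cs)) = det C * det (gram (map L bs)) * det C"
    unfolding gL using Cc Gc
    by (simp add: det_mult[of _ ?m] det_transpose[OF Cc])
  have dC: "det C \<noteq> 0"
  proof
    assume "det C = 0"
    then obtain w where w: "w \<in> carrier_vec ?m" "w \<noteq> 0\<^sub>v ?m" "C *\<^sub>v w = 0\<^sub>v ?m"
      using det_0_iff_vec_prod_zero_field[OF Cc] by blast
    have "(\<Sum>j<length cs. (w $ j) *\<^sub>R cs!j) = (\<Sum>j<?m. (w $ j) *\<^sub>R (\<Sum>i<?m. inner (cs!j) (bs!i) *\<^sub>R bs!i))"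
      using exp len by (intro sum.cong) auto
    also have "\<dots> = (\<Sum>i<?m. (\<Sum>j<?m. C $$ (i,j) * w $ j) *\<^sub>R bs!i)"
      apply (simp add: scaleR_sum_right scaleR_sum_left C_def)
      apply (subst sum.swap)
      by (simp add: mult.commute)
    also have "\<dots> = (\<Sum>i<?m. (C *\<^sub>v w) $ i *\<^sub>R bs!i)"
      by (intro sum.cong refl) (simp add: mult_mat_vec_entry[OF Cc w(1)])
    also have "\<dots> = 0" using w(3) by simp
    finally have "\<forall>j<length cs. w $ j = 0" using lfreeD[OF lf, of "\<lambda>j. w $ j"] by blast
    hence "w = 0\<^sub>v ?m" using w(1) len by (intro eq_vecI) auto
    thus False using w(2) by simp
  qed
  have pos: "det (gram cs) > 0" using dcs dC by (simp add: zero_less_mult_iff) linarith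
  have "normal_jacobian L S = sqrt (det (gram (map L bs)))"
    unfolding normal_jacobian_gram Let_def H_def[symmetric] bs_def[symmetric] ..
  also have "det (gram (map L bs)) = det (gram (map L cs)) / det (gram cs)"
    using dL dcs dC by (simp add: field_simps)
  finally show ?thesis using pos by simp
qed

lemma cinner_Re: "inner x y = Re (cinner x y)"
  unfolding inner_vec_def cinner_def inner_complex_def by (simp add: Re_sum)

lemma cinner_add_left: "cinner (x + y) z = cinner x z + cinner y z"
  unfolding cinner_def by (simp add: distrib_right sum.distrib)
lemma cinner_add_right: "cinner z (x + y) = cinner z x + cinner z y"
  unfolding cinner_def by (simp add: distrib_left sum.distrib)
lemma cinner_diff_left: "cinner (x - y) z = cinner x z - cinner y z"
  unfolding cinner_def by (simp add: left_diff_distrib sum_subtractf)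
lemma cinner_diff_right: "cinner z (x - y) = cinner z x - cinner z y"
  unfolding cinner_def by (simp add: right_diff_distrib sum_subtractf)
lemma cinner_scale_left: "cinner (c *s x) z = c * cinner x z"
  unfolding cinner_def by (simp add: sum_distrib_left mult.assoc)
lemma cinner_scale_right: "cinner z (c *s x) = cnj c * cinner z x"
  unfolding cinner_def by (simp add: sum_distrib_left mult_ac)
lemma vec_scaleR_nth: "(r *\<^sub>R x) $ i = of_real r * (x $ i :: complex)"
  by (simp only: vector_scaleR_component) (simp add: scaleR_conv_of_real)
lemma cinner_scaleR_left: "cinner (r *\<^sub>R x) z = of_real r * cinner x z"
  unfolding cinner_def vec_scaleR_nth by (simp add: sum_distrib_left mult.assoc)
lemma cinner_scaleR_right: "cinner z (r *\<^sub>R x) = of_real r * cinner z x"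
  unfolding cinner_def vec_scaleR_nth by (simp add: sum_distrib_left mult_ac)
lemma cinner_zero_left[simp]: "cinner 0 z = 0" unfolding cinner_def by simp
lemma cinner_zero_right[simp]: "cinner z 0 = 0" unfolding cinner_def by simp
lemma cinner_neg_left: "cinner (- x) z = - cinner x z" unfolding cinner_def by (simp add: sum_negf)
lemma cinner_commute: "cinner y x = cnj (cinner x y)"
  unfolding cinner_def by (simp add: mult.commute)
lemma cinner_sum_left: "cinner (\<Sum>i\<in>I. f i) z = (\<Sum>i\<in>I. cinner (f i) z)"
  unfolding cinner_def by (simp add: sum_distrib_right sum.swap[of _ I])
lemma cinner_sum_right: "cinner z (\<Sum>i\<in>I. f i) = (\<Sum>i\<in>I. cinner z (f i))"
  unfolding cinner_def by (simp add: sum_distrib_left sum.swap[of _ I])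

lemma cinner_self: "cinner x x = of_real ((norm x)^2)"
proof -
  have "Im (cinner x x) = 0" unfolding cinner_def by (simp add: Im_sum)
  moreover have "Re (cinner x x) = (norm x)^2" using cinner_Re[of x x] by (simp add: power2_norm_eq_inner)
  ultimately show ?thesis by (simp add: complex_eq_iff)
qed

lemma cinner_self_zero: "cinner x x = 0 \<longleftrightarrow> x = 0"
  by (simp add: cinner_self)

definition frob :: "complex^'n^'n \<Rightarrow> complex^'n^'n \<Rightarrow> complex" where
  "frob X Y = (\<Sum>i\<in>UNIV. cinner (X$i) (Y$i))"

lemma inner_frob: "inner X Y = Re (frob X Y)"
  unfolding frob_def by (simp only: inner_vec_def[of X Y] cinner_Re Re_sum)

definition outer :: "complex^'n \<Rightarrow> complex^'n \<Rightarrow> complex^'n^'n" where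
  "outer y w = (\<chi> i j. y$i * cnj (w$j))"

lemma outer_mult: "outer y w *v x = cinner x w *s y"
  unfolding outer_def matrix_vector_mult_def cinner_def
  by (simp add: Finite_Cartesian_Product.vec_eq_iff sum_distrib_left mult_ac)

lemma frob_outer_left: "frob (outer y w) Z = cinner y (Z *v w)"
  unfolding frob_def outer_def cinner_def matrix_vector_mult_def
  by (simp add: sum_distrib_left mult_ac)

lemma inner_outer_left: "inner (outer y w) Z = Re (cinner y (Z *v w))"
  by (simp add: inner_frob frob_outer_left)

lemma inner_outer_right: "inner Z (outer y w) = Re (cinner y (Z *v w))"
  by (subst inner_commute) (rule inner_outer_left)

lemma inner_outer_outer: "inner (outer y w) (outer y' w') = Re (cinner w' w * cinner y y')"
  by (simp add: inner_outer_left outer_mult cinner_scale_right cinner_commute[of w w'])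

lemma outer_add_left: "outer (x + y) w = outer x w + outer y w"
  unfolding outer_def by (vector distrib_right)
lemma outer_scaleR_left: "outer (r *\<^sub>R x) w = r *\<^sub>R outer x w"
  unfolding outer_def by (vector vec_scaleR_nth mult.assoc)
lemma outer_scale_left: "outer (c *s x) w = (\<chi> i j. c * outer x w $ i $ j)"
  unfolding outer_def by (vector mult.assoc)
lemma outer_zero_left[simp]: "outer 0 w = 0"
  unfolding outer_def by vector
lemma outer_diff_left: "outer (x - y) w = outer x w - outer y w"
  unfolding outer_def by (vector left_diff_distrib)
lemma outer_sum_left: "outer (\<Sum>i\<in>I. f i) w = (\<Sum>i\<in>I. outer (f i) w)"
  by (induction I rule: infinite_finite_induct) (auto simp: outer_add_left)

lemma mat_mult: "Finite_Cartesian_Product.mat c *v x = c *s (x :: complex^'n)"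
  unfolding matrix_vector_mult_def Finite_Cartesian_Product.mat_def
  by (simp add: Finite_Cartesian_Product.vec_eq_iff if_distrib if_distribR cong: if_cong)

lemma matrix_eq_mult: "(\<And>x. X *v x = Y *v (x::complex^'n)) \<Longrightarrow> X = (Y::complex^'n^'n)"
proof -
  assume h: "\<And>x. X *v x = Y *v (x::complex^'n)"
  show "X = Y" unfolding Finite_Cartesian_Product.vec_eq_iff
  proof (intro allI)
    fix i j
    have "(X *v axis j 1) $ i = (Y *v axis j 1) $ i" using h by simp
    thus "X $ i $ j = Y $ i $ j"
      unfolding matrix_vector_mult_def axis_def by (simp add: if_distrib if_distribR cong: if_cong)
  qed
qed

lemma sum_split_add: fixes a b :: nat shows "(\<Sum>i<a+b. f i) = (\<Sum>i<a. f i) + (\<Sum>i<b. f (a+i))"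
  by (induction b) (auto simp: add.assoc)

lemma lincomb_append:
  "(\<Sum>i<length (xs@ys). (if i < length xs then a i else b (i - length xs)) *\<^sub>R (xs@ys)!i)
    = (\<Sum>i<length xs. a i *\<^sub>R xs!i) + (\<Sum>i<length ys. b i *\<^sub>R ys!i)"
  by (simp add: sum_split_add nth_append)

lemma spans_append:
  assumes "\<And>x. x \<in> S \<Longrightarrow> \<exists>a b. x = (\<Sum>i<length xs. a i *\<^sub>R xs!i) + (\<Sum>i<length ys. b i *\<^sub>R ys!i)"
  shows "spans S (xs @ ys)"
  unfolding spans_def
proof
  fix x assume "x \<in> S"
  then obtain a b where "x = (\<Sum>i<length xs. a i *\<^sub>R xs!i) + (\<Sum>i<length ys. b i *\<^sub>R ys!i)"
    using assms by blast
  hence "x = (\<Sum>i<length (xs@ys). (if i < length xs then a i else b (i - length xs)) *\<^sub>R (xs@ys)!i)"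
    by (simp only: lincomb_append)
  thus "\<exists>c. x = (\<Sum>i<length (xs@ys). c i *\<^sub>R (xs@ys)!i)"
    by (rule exI[of _ "\<lambda>i. if i < length xs then a i else b (i - length xs)"])
qed

lemma onl_append:
  assumes "onl xs" "onl ys" "\<And>i j. i < length xs \<Longrightarrow> j < length ys \<Longrightarrow> inner (xs!i) (ys!j) = 0"
  shows "onl (xs @ ys)"
  unfolding onl_def
proof (intro allI impI)
  fix i j assume ij: "i < length (xs@ys)" "j < length (xs@ys)"
  show "inner ((xs@ys)!i) ((xs@ys)!j) = (if i = j then 1 else 0)"
  proof (cases "i < length xs"; cases "j < length xs")
    assume "i < length xs" "j < length xs"
    thus ?thesis using assms(1) unfolding onl_def by (simp add: nth_append)
  next
    assume a: "i < length xs" "\<not> j < length xs"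
    thus ?thesis using assms(3)[of i "j - length xs"] ij by (simp add: nth_append)
  next
    assume a: "\<not> i < length xs" "j < length xs"
    thus ?thesis using assms(3)[of j "i - length xs"] ij by (simp add: nth_append inner_commute)
  next
    assume a: "\<not> i < length xs" "\<not> j < length xs"
    hence "i - length xs < length ys" "j - length xs < length ys" using ij by auto
    hence "inner (ys!(i - length xs)) (ys!(j - length xs)) = (if i - length xs = j - length xs then 1 else 0)"
      using assms(2) unfolding onl_def by blast
    moreover have "(i - length xs = j - length xs) = (i = j)" using a by auto
    ultimately show ?thesis using a by (simp add: nth_append)
  qed
qed

definition csub :: "(complex^'n) set \<Rightarrow> bool" where
  "csub S \<longleftrightarrow> subspace S \<and> (\<forall>x\<in>S. \<forall>c. c *s x \<in> S)"

lemma c_onb_exists: "csub S \<Longrightarrow> \<exists>us. c_onb S us"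
proof (induction "dim S" arbitrary: S rule: less_induct)
  case less
  show ?case
  proof (cases "S \<subseteq> {0}")
    case True
    have "c_onb S []" unfolding c_onb_def using True by auto
    thus ?thesis by blast
  next
    case False
    then obtain x where x: "x \<in> S" "x \<noteq> 0" by blast
    define u where "u = of_real (1 / norm x) *s x"
    have uS: "u \<in> S" using less.prems x unfolding csub_def u_def by blast
    have "cinner u u = of_real (1 / norm x) * (cnj (of_real (1 / norm x)) * cinner x x)"
      unfolding u_def by (simp only: cinner_scale_left cinner_scale_right mult.left_commute)
    also have "\<dots> = of_real ((1 / norm x) * (1 / norm x) * (norm x)^2)"
      by (simp add: cinner_self)
    also have "\<dots> = 1" using x(2) by (simp add: power2_eq_square)
    finally have uu: "cinner u u = 1" .
    define S' where "S' = {y\<in>S. cinner y u = 0}"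
    have cS': "csub S'" using less.prems unfolding csub_def S'_def subspace_def
      by (auto simp: cinner_add_left cinner_scaleR_left cinner_scale_left)
    have sub: "S' \<subset> S"
    proof -
      have "S' \<subseteq> S" unfolding S'_def by auto
      moreover have "u \<notin> S'" using uu unfolding S'_def by auto
      ultimately show ?thesis using uS by blast
    qed
    have "dim S' < dim S"
    proof (rule dim_psubset)
      have h1: "span S' = S'" using cS' unfolding csub_def by (metis span_eq_iff)
      have h2: "span S = S" using less.prems unfolding csub_def by (metis span_eq_iff)
      show "span S' \<subset> span S" by (subst h1, subst h2, rule sub)
    qed
    then obtain us' where us': "c_onb S' us'" using less.hyps cS' by blast
    have "c_onb S (u # us')" unfolding c_onb_def
    proof (intro conjI allI impI ballI)
      fix i j assume ij: "i < length (u # us')" "j < length (u # us')"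
      have orth: "\<And>k. k < length us' \<Longrightarrow> cinner (us'!k) u = 0"
        using us' unfolding c_onb_def S'_def by (auto dest!: nth_mem)
      have orth2: "\<And>k. k < length us' \<Longrightarrow> cinner u (us'!k) = 0"
        using orth by (subst cinner_commute) simp
      show "cinner ((u # us')!i) ((u # us')!j) = (if i = j then 1 else 0)"
      proof (cases i; cases j)
        assume "i = 0" "j = 0" thus ?thesis using uu by simp
      next
        fix j' assume "i = 0" "j = Suc j'" thus ?thesis using orth2 ij by simp
      next
        fix i' assume "i = Suc i'" "j = 0" thus ?thesis using orth ij by simp
      next
        fix i' j' assume "i = Suc i'" "j = Suc j'" thus ?thesis using us' ij unfolding c_onb_def by simp
      qed
    next
      show "set (u # us') \<subseteq> S" using uS us' unfolding c_onb_def S'_def by auto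
    next
      fix y assume y: "y \<in> S"
      define y' where "y' = y - cinner y u *s u"
      have "y' \<in> S" using y uS less.prems unfolding y'_def csub_def by (simp add: subspace_diff)
      moreover have "cinner y' u = 0" unfolding y'_def by (simp add: cinner_diff_left cinner_scale_left uu)
      ultimately have "y' \<in> S'" unfolding S'_def by simp
      then obtain c where c: "y' = (\<Sum>i<length us'. c i *s us'!i)" using us' unfolding c_onb_def by blast
      define c' where "c' = (\<lambda>i. case i of 0 \<Rightarrow> cinner y u | Suc k \<Rightarrow> c k)"
      have "(\<Sum>i<length (u # us'). c' i *s (u # us')!i) = cinner y u *s u + y'"
        unfolding c by (simp add: sum.lessThan_Suc_shift c'_def del: sum.lessThan_Suc)
      also have "\<dots> = y" unfolding y'_def by simp
      finally show "\<exists>c. y = (\<Sum>i<length (u # us'). c i *s (u # us')!i)" by (intro exI[of _ c']) simp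
    qed
    thus ?thesis by blast
  qed
qed

lemma csub_perp: "csub (perp v)"
  unfolding csub_def perp_def subspace_def
  by (auto simp: cinner_add_left cinner_scaleR_left cinner_scale_left)

lemma realify_r_onb:
  assumes "c_onb S us" "csub S"
  shows "r_onb S (us @ map (\<lambda>u. \<i> *s u) us)"
proof -
  have cu: "\<And>i j. i < length us \<Longrightarrow> j < length us \<Longrightarrow> cinner (us!i) (us!j) = (if i = j then 1 else 0)"
    using assms(1) unfolding c_onb_def by blast
  have o1: "onl us" unfolding onl_def using cu by (simp add: cinner_Re)
  have o2: "onl (map (\<lambda>u. \<i> *s u) us)" unfolding onl_def using cu
    by (simp add: cinner_Re cinner_scale_left cinner_scale_right)
  have o3: "onl (us @ map (\<lambda>u. \<i> *s u) us)"
    by (rule onl_append[OF o1 o2]) (simp add: cinner_Re cinner_scale_right cu)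
  have s: "set (us @ map (\<lambda>u. \<i> *s u) us) \<subseteq> S"
    using assms unfolding c_onb_def csub_def by auto
  have sp: "spans S (us @ map (\<lambda>u. \<i> *s u) us)"
  proof (rule spans_append)
    fix x assume "x \<in> S"
    then obtain c where c: "x = (\<Sum>i<length us. c i *s us!i)" using assms(1) unfolding c_onb_def by blast
    have "\<And>i. c i *s us!i = Re (c i) *\<^sub>R us!i + Im (c i) *\<^sub>R (\<i> *s us!i)"
      by (simp add: Finite_Cartesian_Product.vec_eq_iff vec_scaleR_nth complex_eq_iff algebra_simps)
    hence "x = (\<Sum>i<length us. Re (c i) *\<^sub>R us!i) + (\<Sum>i<length (map (\<lambda>u. \<i> *s u) us). Im (c i) *\<^sub>R (map (\<lambda>u. \<i> *s u) us)!i)"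
      unfolding c by (simp add: sum.distrib)
    thus "\<exists>a b. x = (\<Sum>i<length us. a i *\<^sub>R us!i) + (\<Sum>i<length (map (\<lambda>u. \<i> *s u) us). b i *\<^sub>R (map (\<lambda>u. \<i> *s u) us)!i)"
      by (intro exI[of _ "\<lambda>i. Re (c i)"] exI[of _ "\<lambda>i. Im (c i)"])
  qed
  show ?thesis unfolding r_onb_alt using o3 s sp by blast
qed

lemma det_cnj: "det (map_mat cnj M) = cnj (det (M :: complex mat))"
  unfolding det_def by (simp add: cnj_sum cnj_prod)

lemma realify_det:
  fixes M :: "complex mat"
  assumes M: "M \<in> carrier_mat m m"
  shows "det (four_block_mat (map_mat Re M) (- map_mat Im M) (map_mat Im M) (map_mat Re M)) = (cmod (det M))^2"
proof -
  let ?R = "map_mat Re M" and ?J = "map_mat Im M"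
  let ?Rc = "map_mat complex_of_real ?R" and ?Jc = "map_mat complex_of_real ?J"
  let ?D = "four_block_mat ?R (- ?J) ?J ?R"
  let ?Dc = "four_block_mat ?Rc (- ?Jc) ?Jc ?Rc"
  let ?I = "1\<^sub>m m :: complex mat" and ?Z = "0\<^sub>m m m :: complex mat"
  let ?P = "four_block_mat ?I (\<i> \<cdot>\<^sub>m ?I) ?Z ?I"
  let ?Q = "four_block_mat ?I ((- \<i>) \<cdot>\<^sub>m ?I) ?Z ?I"
  have cR: "?Rc \<in> carrier_mat m m" "?Jc \<in> carrier_mat m m" "- ?Jc \<in> carrier_mat m m" using M by auto
  have cI: "?I \<in> carrier_mat m m" "?Z \<in> carrier_mat m m" "\<i> \<cdot>\<^sub>m ?I \<in> carrier_mat m m" "(- \<i>) \<cdot>\<^sub>m ?I \<in> carrier_mat m m" by auto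
  have Dc: "map_mat complex_of_real ?D = ?Dc"
    using M by (intro eq_matI) (auto simp: index_mat_four_block)
  have d1: "det (map_mat complex_of_real ?D) = complex_of_real (det ?D)" by (rule of_real_hom.hom_det)
  have M1: "?Rc + \<i> \<cdot>\<^sub>m ?Jc = M" using M by (intro eq_matI) (auto simp: complex_eq_iff)
  have M2: "- ?Jc + \<i> \<cdot>\<^sub>m ?Rc = \<i> \<cdot>\<^sub>m M" using M by (intro eq_matI) (auto simp: complex_eq_iff)
  have PD: "?P * ?Dc = four_block_mat M (\<i> \<cdot>\<^sub>m M) ?Jc ?Rc"
  proof -
    have "?P * ?Dc = four_block_mat (?I * ?Rc + (\<i> \<cdot>\<^sub>m ?I) * ?Jc) (?I * (- ?Jc) + (\<i> \<cdot>\<^sub>m ?I) * ?Rc)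
        (?Z * ?Rc + ?I * ?Jc) (?Z * (- ?Jc) + ?I * ?Rc)"
      by (rule mult_four_block_mat[OF cI(1,3,2,1) cR(1,3,2,1)])
    also have "\<dots> = four_block_mat (?Rc + \<i> \<cdot>\<^sub>m ?Jc) (- ?Jc + \<i> \<cdot>\<^sub>m ?Rc) ?Jc ?Rc"
    proof -
      have z: "- ?Z + ?Rc = ?Rc" using M by (intro eq_matI) auto
      show ?thesis using cR by (simp add: mult_smult_assoc_mat[OF cI(1)] z)
    qed
    finally show ?thesis unfolding M1 M2 .
  qed
  have cM: "\<i> \<cdot>\<^sub>m M \<in> carrier_mat m m" using M by simp
  have PDQ: "?P * ?Dc * ?Q = four_block_mat M ?Z ?Jc (map_mat cnj M)"
  proof -
    have "?P * ?Dc * ?Q = four_block_mat (M * ?I + (\<i> \<cdot>\<^sub>m M) * ?Z) (M * ((- \<i>) \<cdot>\<^sub>m ?I) + (\<i> \<cdot>\<^sub>m M) * ?I)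
        (?Jc * ?I + ?Rc * ?Z) (?Jc * ((- \<i>) \<cdot>\<^sub>m ?I) + ?Rc * ?I)"
      unfolding PD by (rule mult_four_block_mat[OF M cM cR(2,1) cI(1,4,2,1)])
    also have "\<dots> = four_block_mat M (M * ((- \<i>) \<cdot>\<^sub>m ?I) + \<i> \<cdot>\<^sub>m M) ?Jc (?Jc * ((- \<i>) \<cdot>\<^sub>m ?I) + ?Rc)"
      using M cR cM by simp
    also have "M * ((- \<i>) \<cdot>\<^sub>m ?I) + \<i> \<cdot>\<^sub>m M = ?Z"
      using M by (simp add: mult_smult_distrib[OF M cI(1)]) (intro eq_matI, auto)
    also have "?Jc * ((- \<i>) \<cdot>\<^sub>m ?I) + ?Rc = map_mat cnj M"
      using M by (simp add: mult_smult_distrib[OF cR(2) cI(1)]) (intro eq_matI, auto simp: complex_eq_iff)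
    finally show ?thesis .
  qed
  have dP: "det ?P = 1" by (subst det_four_block_mat_lower_left_zero[OF cI(1,3)]) auto
  have dQ: "det ?Q = 1" by (subst det_four_block_mat_lower_left_zero[OF cI(1,4)]) auto
  have cP: "?P \<in> carrier_mat (m+m) (m+m)" "?Q \<in> carrier_mat (m+m) (m+m)" "?Dc \<in> carrier_mat (m+m) (m+m)"
    using cR by auto
  have c1: "?P * ?Dc \<in> carrier_mat (m+m) (m+m)" by (rule mult_carrier_mat[OF cP(1) cP(3)])
  have "det (?P * ?Dc * ?Q) = det ?Dc"
    unfolding det_mult[OF c1 cP(2)] det_mult[OF cP(1) cP(3)] dP dQ by simp
  also have "det (?P * ?Dc * ?Q) = det M * det (map_mat cnj M)"
    unfolding PDQ by (rule det_four_block_mat_upper_right_zero) (use M in auto)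
  finally have "complex_of_real (det ?D) = det M * cnj (det M)"
    using d1 Dc det_cnj by simp
  also have "\<dots> = complex_of_real ((cmod (det M))^2)" by (rule complex_norm_square[symmetric])
  finally show ?thesis by (simp only: of_real_eq_iff)
qed

lemma cscaleR: "r *\<^sub>R (z::complex) = of_real r * z" by (simp add: scaleR_conv_of_real)

lemma mv_scaleR_right: "(M::complex^'n^'m) *v (r *\<^sub>R x) = r *\<^sub>R (M *v x)"
  unfolding matrix_vector_mult_def
  by (simp add: Finite_Cartesian_Product.vec_eq_iff cscaleR sum_distrib_left mult_ac)
lemma mv_scaleR_left: "(r *\<^sub>R (M::complex^'n^'m)) *v x = r *\<^sub>R (M *v x)"
  unfolding matrix_vector_mult_def
  by (simp add: Finite_Cartesian_Product.vec_eq_iff cscaleR sum_distrib_left mult_ac)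
lemma mv_scale_right: "(M::complex^'n^'m) *v (c *s x) = c *s (M *v x)"
  unfolding matrix_vector_mult_def
  by (simp add: Finite_Cartesian_Product.vec_eq_iff sum_distrib_left mult_ac)
lemma mv_sum_right: "(M::complex^'n^'m) *v (\<Sum>i\<in>I. f i) = (\<Sum>i\<in>I. M *v f i)"
  by (induction I rule: infinite_finite_induct) (auto simp: matrix_vector_right_distrib)
lemma mv_neg_left: "(- (M::complex^'n^'m)) *v x = - (M *v x)"
  unfolding matrix_vector_mult_def by (simp add: Finite_Cartesian_Product.vec_eq_iff sum_negf)
lemma scale_scaleR: "(of_real r * c) *s (x::complex^'n) = r *\<^sub>R (c *s x)"
  by (simp add: Finite_Cartesian_Product.vec_eq_iff cscaleR mult.assoc)
lemma scaleR_scale: "(r *\<^sub>R c) *s (x::complex^'n) = r *\<^sub>R (c *s x)"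
  by (simp add: Finite_Cartesian_Product.vec_eq_iff cscaleR mult.assoc)
lemma scale_add_left: "(a + b) *s (x::complex^'n) = a *s x + b *s x"
  by (simp add: Finite_Cartesian_Product.vec_eq_iff distrib_right)
lemma inner_complex_Re: "inner (a::complex) b = Re (a * cnj b)"
  by (simp add: inner_complex_def)

lemma c_onb_expand:
  assumes "c_onb S us" "x \<in> S"
  shows "x = (\<Sum>k<length us. cinner x (us!k) *s us!k)"
proof -
  obtain c where c: "x = (\<Sum>k<length us. c k *s us!k)" using assms unfolding c_onb_def by blast
  have ci: "\<And>j. j < length us \<Longrightarrow> cinner x (us!j) = c j"
  proof -
    fix j assume j: "j < length us"
    have "cinner x (us!j) = (\<Sum>k<length us. c k * cinner (us!k) (us!j))"
      unfolding c by (simp add: cinner_sum_left cinner_scale_left)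
    also have "\<dots> = (\<Sum>k<length us. if k = j then c j else 0)"
      using assms(1) j unfolding c_onb_def by (intro sum.cong) auto
    finally show "cinner x (us!j) = c j" using j by simp
  qed
  have "(\<Sum>k<length us. c k *s us!k) = (\<Sum>k<length us. cinner x (us!k) *s us!k)"
    by (rule sum.cong) (auto simp: ci)
  thus ?thesis using c by metis
qed

lemma c_onb_distinct: assumes "c_onb S us" shows "distinct us"
  unfolding distinct_conv_nth
proof (intro allI impI)
  fix i j assume ij: "i < length us" "j < length us" "i \<noteq> j"
  hence "cinner (us!i) (us!j) = 0" "cinner (us!i) (us!i) = 1" using assms unfolding c_onb_def by auto
  thus "us!i \<noteq> us!j" by auto
qed

lemma c_onb_value: assumes "c_onb S us" "u \<in> set us" "u' \<in> set us"
  shows "cinner u u' = (if u = u' then 1 else 0)"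
proof -
  obtain i j where "i < length us" "j < length us" "u = us!i" "u' = us!j" using assms(2,3) by (metis in_set_conv_nth)
  moreover have "(us!i = us!j) = (i = j)" using c_onb_distinct[OF assms(1)] calculation(1,2) nth_eq_iff_index_eq by blast
  ultimately show ?thesis using assms(1) unfolding c_onb_def by auto
qed

lemma onl_map_distinct:
  assumes "distinct ps" "\<And>p q. p \<in> set ps \<Longrightarrow> q \<in> set ps \<Longrightarrow> inner (f p) (f q) = (if p = q then 1 else 0)"
  shows "onl (map f ps)"
  unfolding onl_def
proof (intro allI impI)
  fix i j assume ij: "i < length (map f ps)" "j < length (map f ps)"
  hence "(ps!i = ps!j) = (i = j)" using assms(1) nth_eq_iff_index_eq by auto
  thus "inner (map f ps ! i) (map f ps ! j) = (if i = j then 1 else 0)" using assms(2) ij by auto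
qed

lemma onl_value: assumes "onl xs" "x \<in> set xs" "y \<in> set xs"
  shows "inner x y = (if x = y then 1 else 0)"
proof -
  obtain i j where "i < length xs" "j < length xs" "x = xs!i" "y = xs!j" using assms(2,3) by (metis in_set_conv_nth)
  moreover have "(xs!i = xs!j) = (i = j)"
    using lfree_distinct[OF onl_lfree[OF assms(1)]] calculation(1,2) nth_eq_iff_index_eq by blast
  ultimately show ?thesis using assms(1) unfolding onl_def by auto
qed

lemma gram_append_orth:
  assumes "\<And>i j. i < length xs \<Longrightarrow> j < length ys \<Longrightarrow> inner (xs!i) (ys!j) = 0"
  shows "det (gram (xs @ ys)) = det (gram xs) * det (gram ys)"
proof -
  have "gram (xs @ ys) = four_block_mat (gram xs) (0\<^sub>m (length xs) (length ys)) (0\<^sub>m (length ys) (length xs)) (gram ys)"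
  proof (rule eq_matI)
    fix i j assume "i < dim_row (four_block_mat (gram xs) (0\<^sub>m (length xs) (length ys)) (0\<^sub>m (length ys) (length xs)) (gram ys))"
      "j < dim_col (four_block_mat (gram xs) (0\<^sub>m (length xs) (length ys)) (0\<^sub>m (length ys) (length xs)) (gram ys))"
    hence ij: "i < length xs + length ys" "j < length xs + length ys" by (auto simp: gram_def)
    show "gram (xs @ ys) $$ (i, j) = four_block_mat (gram xs) (0\<^sub>m (length xs) (length ys)) (0\<^sub>m (length ys) (length xs)) (gram ys) $$ (i, j)"
      using ij assms[of i "j - length xs"] assms[of j "i - length xs"]
      by (auto simp: gram_def nth_append inner_commute)
  qed (auto simp: gram_def)
  thus ?thesis by (simp add: det_four_block_mat_lower_left_zero[of _ "length xs" _ "length ys"])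
qed

abbreviation Lm :: "complex^'n^'n \<Rightarrow> complex \<Rightarrow> complex^'n^'n" where
  "Lm A l \<equiv> Finite_Cartesian_Product.mat l - A"

definition bet :: "complex^'n^'n \<Rightarrow> complex \<Rightarrow> complex^'n \<Rightarrow> complex^'n \<Rightarrow> complex" where
  "bet A l v d = cinner (Lm A l *v d) v"

definition hh :: "complex^'n^'n \<Rightarrow> complex \<Rightarrow> complex^'n \<Rightarrow> complex^'n
    \<Rightarrow> (complex^'n^'n) \<times> complex \<times> (complex^'n)" where
  "hh A l v d = (outer (A_lv A l v d + (bet A l v d / 2) *s v) v, - (bet A l v d / 2), d)"

lemma T_iff: "(dA, dl, dw) \<in> tangent_V A l v \<longleftrightarrow>
   cinner dw v = 0 \<and> dl *s v - dA *v v + Lm A l *v dw = 0"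
  unfolding tangent_V_def by (simp add: matrix_vector_mult_diff_rdistrib mat_mult)

lemma T_subspace: "subspace (tangent_V A l v)"
  unfolding subspace_def
proof (intro conjI ballI allI)
  show "0 \<in> tangent_V A l v" by (simp add: zero_prod_def T_iff)
next
  fix x y assume "x \<in> tangent_V A l v" "y \<in> tangent_V A l v"
  thus "x + y \<in> tangent_V A l v"
    by (cases x; cases y) (auto simp: T_iff cinner_add_left scale_add_left matrix_vector_mult_add_rdistrib
        matrix_vector_right_distrib algebra_simps)
next
  fix c :: real and x assume "x \<in> tangent_V A l v"
  moreover have "\<And>a b. c *\<^sub>R (a - b) = c *\<^sub>R a - c *\<^sub>R (b :: complex^'n)" by (simp add: algebra_simps)
  ultimately show "c *\<^sub>R x \<in> tangent_V A l v"
    by (cases x) (auto simp: T_iff cinner_scaleR_left scaleR_scale mv_scaleR_left mv_scaleR_right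
        simp flip: scaleR_add_right scaleR_diff_right)
qed

locale EP =
  fixes A :: "complex^'n^'n" and l :: complex and v :: "complex^'n"
  assumes W: "in_W A l v"
begin

lemma nv: "cinner v v = 1"
  using W unfolding in_W_def in_V_def by (simp add: cinner_self)

lemma ev: "Lm A l *v v = 0"
  using W unfolding in_W_def in_V_def by simp

lemma Alv_eq: "A_lv A l v x = Lm A l *v x - bet A l v x *s v"
  unfolding A_lv_def proj_perp_def bet_def by (simp add: nv)

lemma Lm_decomp: "Lm A l *v x = A_lv A l v x + bet A l v x *s v"
  by (simp add: Alv_eq)

lemma Alv_perp: "cinner (A_lv A l v x) v = 0"
  unfolding Alv_eq by (simp add: cinner_diff_left cinner_scale_left nv bet_def)

lemma Alv_perp': "A_lv A l v x \<in> perp v"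
  using Alv_perp unfolding perp_def by simp

lemma bet_add: "bet A l v (x + y) = bet A l v x + bet A l v y"
  unfolding bet_def by (simp add: matrix_vector_right_distrib cinner_add_left)
lemma bet_scaleR: "bet A l v (r *\<^sub>R x) = of_real r * bet A l v x"
  unfolding bet_def by (simp add: mv_scaleR_right cinner_scaleR_left)
lemma bet_scale: "bet A l v (c *s x) = c * bet A l v x"
  unfolding bet_def by (simp add: mv_scale_right cinner_scale_left)

lemma Alv_add: "A_lv A l v (x + y) = A_lv A l v x + A_lv A l v y"
  unfolding Alv_eq by (simp add: matrix_vector_right_distrib bet_add scale_add_left algebra_simps)
lemma Alv_scaleR: "A_lv A l v (r *\<^sub>R x) = r *\<^sub>R A_lv A l v x"
  unfolding Alv_eq by (simp add: mv_scaleR_right bet_scaleR scale_scaleR algebra_simps)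
lemma Alv_scale: "A_lv A l v (c *s x) = c *s A_lv A l v x"
  unfolding Alv_eq by (simp add: mv_scale_right bet_scale vector_smult_assoc vector_ssub_ldistrib)

lemma Alv_zero: "A_lv A l v 0 = 0"
  unfolding Alv_eq by (simp add: bet_def)

lemma Alv_inj: assumes "x \<in> perp v" "A_lv A l v x = 0" shows "x = 0"
proof -
  have "inj_on (A_lv A l v) (perp v)" using W unfolding in_W_def bij_betw_def by blast
  moreover have "0 \<in> perp v" unfolding perp_def by simp
  ultimately show ?thesis using assms Alv_zero by (metis inj_on_contraD)
qed

lemma hh_T: assumes "d \<in> perp v" shows "hh A l v d \<in> tangent_V A l v"
proof -
  let ?Y = "A_lv A l v d + (bet A l v d / 2) *s v"
  have e1: "outer ?Y v *v v = ?Y" by (simp add: outer_mult nv)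
  have "(- (bet A l v d / 2)) *s v - outer ?Y v *v v + Lm A l *v d = 0"
    unfolding e1 Lm_decomp by (simp add: Finite_Cartesian_Product.vec_eq_iff field_simps)
  thus ?thesis using assms unfolding hh_def T_iff perp_def by simp
qed

end

lemma lin_pi1: "linear (\<lambda>(dA::complex^'n^'n, dl::complex, dw::complex^'n). dA)"
  by (rule linearI) (auto simp: split_beta)
lemma lin_pi2: "linear (\<lambda>(dA::complex^'n^'n, dl::complex, dw::complex^'n). dw)"
  by (rule linearI) (auto simp: split_beta)

context EP begin

lemma hh_linear: "linear (hh A l v)"
proof (rule linearI)
  fix x y
  have "A_lv A l v (x + y) + (bet A l v (x + y) / 2) *s v
      = (A_lv A l v x + (bet A l v x / 2) *s v) + (A_lv A l v y + (bet A l v y / 2) *s v)"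
    by (simp add: Alv_add bet_add scale_add_left add_divide_distrib algebra_simps)
  thus "hh A l v (x + y) = hh A l v x + hh A l v y"
    by (simp add: hh_def bet_add outer_add_left add_divide_distrib)
next
  fix r :: real and x
  have "A_lv A l v (r *\<^sub>R x) + (bet A l v (r *\<^sub>R x) / 2) *s v
      = r *\<^sub>R (A_lv A l v x + (bet A l v x / 2) *s v)"
    by (simp add: Alv_scaleR bet_scaleR scale_scaleR[symmetric] scaleR_add_right)
  thus "hh A l v (r *\<^sub>R x) = r *\<^sub>R hh A l v x"
    by (simp add: hh_def bet_scaleR outer_scaleR_left cscaleR)
qed

abbreviation "K2 \<equiv> {x \<in> tangent_V A l v. \<forall>y\<in>tangent_V A l v.
   (case y of (dA, dl, dw) \<Rightarrow> dw) = 0 \<longrightarrow> inner x y = 0}"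

lemma T_kernel2: assumes "(E, e, 0) \<in> tangent_V A l v" shows "E *v v = e *s v"
  using assms unfolding T_iff by (simp add: algebra_simps)

lemma hh_K2: assumes "d \<in> perp v" shows "hh A l v d \<in> K2"
proof (intro CollectI conjI ballI impI)
  show "hh A l v d \<in> tangent_V A l v" by (rule hh_T[OF assms])
next
  fix y assume y: "y \<in> tangent_V A l v" "(case y of (dA, dl, dw) \<Rightarrow> dw) = 0"
  obtain E e w where yy: "y = (E, e, w)" by (cases y) auto
  hence w: "w = 0" using y by simp
  have Ev: "E *v v = e *s v" using T_kernel2 y(1) unfolding yy w by blast
  let ?Y = "A_lv A l v d + (bet A l v d / 2) *s v"
  have c1: "cinner ?Y v = bet A l v d / 2"
    by (simp add: cinner_add_left cinner_scale_left Alv_perp nv)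
  have "inner (outer ?Y v) E = Re (cnj e * cinner ?Y v)"
    by (simp add: inner_outer_left Ev cinner_scale_right)
  also have "\<dots> = Re (cnj e * (bet A l v d / 2))" by (simp only: c1)
  finally have i1: "inner (outer ?Y v) E = Re (cnj e * (bet A l v d / 2))" .
  have "inner (hh A l v d) y = inner (outer ?Y v) E + inner (- (bet A l v d / 2)) e"
    unfolding yy w hh_def by simp
  also have "\<dots> = Re (cnj e * (bet A l v d / 2)) + Re (- (bet A l v d / 2) * cnj e)"
    by (simp only: i1 inner_complex_Re)
  also have "\<dots> = 0" by (simp add: mult.commute)
  finally show "inner (hh A l v d) y = 0" .
qed

lemma K2_hh: assumes x: "x \<in> K2" shows "\<exists>d\<in>perp v. x = hh A l v d"
proof -
  obtain dA dl dw where xx: "x = (dA, dl, dw)" by (cases x) auto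
  have xT: "(dA, dl, dw) \<in> tangent_V A l v" using x xx by simp
  have orth: "\<And>E e. (E, e, 0) \<in> tangent_V A l v \<Longrightarrow> inner dA E + inner dl e = 0"
    using x unfolding xx by auto
  define y where "y = dA *v v"
  define Z where "Z = dA - outer y v"
  have Zv: "Z *v v = 0" unfolding Z_def y_def by (simp add: matrix_vector_mult_diff_rdistrib outer_mult nv)
  have "(Z, 0, 0) \<in> tangent_V A l v" unfolding T_iff by (simp add: Zv)
  hence "inner dA Z = 0" using orth[of Z 0] by simp
  moreover have "inner dA Z = inner Z Z"
    unfolding Z_def by (simp add: inner_diff_left inner_diff_right inner_outer_left inner_outer_right
      matrix_vector_mult_diff_rdistrib outer_mult nv y_def)
  ultimately have "Z = 0" by simp
  hence dA: "dA = outer y v" unfolding Z_def by simp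
  have t1: "\<And>e. (outer (e *s v) v, e, 0) \<in> tangent_V A l v"
    unfolding T_iff by (simp add: outer_mult nv)
  have o1: "\<And>e. Re (cnj e * (cinner y v + dl)) = 0"
  proof -
    fix e
    have "inner dA (outer (e *s v) v) + inner dl e = 0" using orth[OF t1[of e]] .
    thus "Re (cnj e * (cinner y v + dl)) = 0"
      unfolding dA by (simp add: inner_outer_outer nv cinner_scale_right inner_complex_Re algebra_simps)
  qed
  have s0: "cinner y v + dl = 0"
    using o1[of 1] o1[of \<i>] by (simp add: complex_eq_iff)
  have tv: "dl *s v - y + Lm A l *v dw = 0" and dwp: "cinner dw v = 0"
    using xT unfolding T_iff dA by (simp_all add: outer_mult nv)
  have y_eq: "y = dl *s v + A_lv A l v dw + bet A l v dw *s v"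
    using tv unfolding Lm_decomp by (simp add: algebra_simps)
  have "cinner y v = dl + bet A l v dw"
    unfolding y_eq by (simp add: cinner_add_left cinner_scale_left Alv_perp nv)
  hence dl: "dl = - (bet A l v dw / 2)" using s0 by (auto simp: complex_eq_iff)
  have "y = A_lv A l v dw + (bet A l v dw / 2) *s v"
    unfolding y_eq dl by (simp add: Finite_Cartesian_Product.vec_eq_iff field_simps)
  hence "x = hh A l v dw" unfolding xx hh_def dA dl by simp
  moreover have "dw \<in> perp v" using dwp unfolding perp_def by simp
  ultimately show ?thesis by blast
qed

end

locale EPU = EP A l v for A :: "complex^'n^'n" and l v +
  fixes us :: "(complex^'n) list"
  assumes U: "c_onb (perp v) us"
begin

definition "ds = us @ map (\<lambda>u. \<i> *s u) us"
definition "cs2 = map (hh A l v) ds"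

lemma ds_onb: "r_onb (perp v) ds"
  unfolding ds_def by (rule realify_r_onb[OF U csub_perp])

lemma ds_props: "onl ds" "set ds \<subseteq> perp v" "spans (perp v) ds"
  using ds_onb unfolding r_onb_alt by auto

lemma len_ds: "length ds = 2 * length us" unfolding ds_def by simp

lemma cs2_K2: "set cs2 \<subseteq> K2"
  unfolding cs2_def using ds_props(2) hh_K2 by auto

lemma K2_span: "K2 \<subseteq> span (set cs2)"
proof
  fix x assume "x \<in> K2"
  then obtain d where d: "d \<in> perp v" "x = hh A l v d" using K2_hh by blast
  then obtain r where r: "d = (\<Sum>i<length ds. r i *\<^sub>R ds!i)" using ds_props(3) unfolding spans_def by blast
  have "x = (\<Sum>i<length ds. r i *\<^sub>R hh A l v (ds!i))"
    unfolding d(2) r using hh_linear by (simp add: linear_sum linear_scale)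
  also have "\<dots> \<in> span (set cs2)"
    unfolding cs2_def by (intro span_sum span_scale span_base) auto
  finally show "x \<in> span (set cs2)" .
qed

lemma pi2_cs2: "map (\<lambda>(dA, dl, dw). dw) cs2 = ds"
  unfolding cs2_def by (simp add: hh_def map_idI)

lemma cs2_lfree: "lfree cs2"
  by (rule lfree_map[OF lin_pi2]) (simp add: pi2_cs2 onl_lfree ds_props(1))

lemma NJ2: "det (gram cs2) > 0 \<and> NJ_pi2 A l v = sqrt (1 / det (gram cs2))"
proof -
  have "det (gram cs2) > 0 \<and> normal_jacobian (\<lambda>(dA, dl, dw). dw) (tangent_V A l v)
      = sqrt (det (gram (map (\<lambda>(dA, dl, dw). dw) cs2)) / det (gram cs2))"
    by (rule NJ_formula[OF lin_pi2 T_subspace cs2_K2 K2_span cs2_lfree])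
  thus ?thesis unfolding NJ_pi2_def pi2_cs2 gram_onl[OF ds_props(1)] by simp
qed

end

lemma mv_sum_left: "(\<Sum>i\<in>I. f i) *v (x::complex^'n) = (\<Sum>i\<in>I. f i *v x)"
  by (induction I rule: infinite_finite_induct) (auto simp: matrix_vector_mult_add_rdistrib)

lemma emb1_linear: "linear (\<lambda>M::complex^'n^'n. (M, 0::complex, 0::complex^'n))"
  by (rule linearI) auto

lemma scale_decomp: "e *s (x::complex^'n) = Re e *\<^sub>R x + Im e *\<^sub>R (\<i> *s x)"
  by (simp add: Finite_Cartesian_Product.vec_eq_iff vec_scaleR_nth complex_eq_iff algebra_simps)

lemma complex_decomp: "(e::complex) = Re e *\<^sub>R 1 + Im e *\<^sub>R \<i>"
  by (simp add: complex_eq_iff)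

context EPU begin

definition "b0 = [v, \<i> *s v] @ ds"
definition "t1 = map (\<lambda>e. (outer (e *s v) v, e, 0::complex^'n)) [1, \<i>]"
definition "t3 = map (\<lambda>(z,u). (outer z u, 0::complex, 0::complex^'n)) (List.product b0 us)"
definition "cs1 = t1 @ cs2 @ t3"

lemma us_perp: "u \<in> set us \<Longrightarrow> cinner u v = 0"
  using U unfolding c_onb_def perp_def by auto
lemma us_perp': "u \<in> set us \<Longrightarrow> cinner v u = 0"
  using us_perp by (subst cinner_commute) simp
lemma ds_perp: "d \<in> set ds \<Longrightarrow> cinner d v = 0"
  using ds_props(2) unfolding perp_def by auto
lemma ds_perp': "d \<in> set ds \<Longrightarrow> cinner v d = 0"
  using ds_perp by (subst cinner_commute) simp

lemma onl2: assumes "inner a a = 1" "inner b b = 1" "inner a b = 0" shows "onl [a, b]"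
  unfolding onl_def
proof (intro allI impI)
  fix i j assume "i < length [a, b]" "j < length [a, b]"
  hence "i = 0 \<or> i = 1" "j = 0 \<or> j = 1" by auto
  thus "inner ([a, b] ! i) ([a, b] ! j) = (if i = j then 1 else 0)"
    using assms by (auto simp: inner_commute)
qed

lemma b0_onl: "onl b0"
  unfolding b0_def
proof (rule onl_append[OF _ ds_props(1)])
  show "onl [v, \<i> *s v]"
    by (rule onl2) (simp_all add: cinner_Re cinner_scale_left cinner_scale_right nv)
next
  fix i j assume ij: "i < length [v, \<i> *s v]" "j < length ds"
  hence c: "cinner v (ds!j) = 0" using ds_perp' nth_mem by blast
  from ij have "i = 0 \<or> i = 1" by auto
  thus "inner ([v, \<i> *s v] ! i) (ds ! j) = 0"
    using c by (auto simp: cinner_Re cinner_scale_left)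
qed

lemma b0_spans: "spans UNIV b0"
  unfolding b0_def
proof (rule spans_append)
  fix x :: "complex^'n"
  define c where "c = cinner x v"
  define p where "p = x - c *s v"
  have "cinner p v = 0" unfolding p_def c_def by (simp add: cinner_diff_left cinner_scale_left nv)
  hence "p \<in> perp v" unfolding perp_def by simp
  then obtain r where r: "p = (\<Sum>i<length ds. r i *\<^sub>R ds!i)" using ds_props(3) unfolding spans_def by blast
  have s2: "(\<Sum>i<length [v, \<i> *s v]. (if i = 0 then Re c else Im c) *\<^sub>R [v, \<i> *s v]!i)
     = Re c *\<^sub>R v + Im c *\<^sub>R (\<i> *s v)"
    by (simp add: numeral_2_eq_2)
  have "x = c *s v + p" unfolding p_def by simp
  also have "c *s v = Re c *\<^sub>R v + Im c *\<^sub>R (\<i> *s v)" by (rule scale_decomp)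
  finally have "x = (\<Sum>i<length [v, \<i> *s v]. (if i = 0 then Re c else Im c) *\<^sub>R [v, \<i> *s v]!i)
      + (\<Sum>i<length ds. r i *\<^sub>R ds!i)" unfolding s2 r .
  thus "\<exists>a b. x = (\<Sum>i<length [v, \<i> *s v]. a i *\<^sub>R [v, \<i> *s v]!i)
      + (\<Sum>i<length ds. b i *\<^sub>R ds!i)" by (intro exI[of _ "\<lambda>i. if i = 0 then Re c else Im c"] exI[of _ r])
qed

lemma t1_T: "(outer (e *s v) v, e, 0) \<in> tangent_V A l v"
  unfolding T_iff by (simp add: outer_mult nv)

lemma t3_T: assumes "u \<in> set us" shows "(outer z u, 0, 0) \<in> tangent_V A l v"
  unfolding T_iff using us_perp'[OF assms] by (simp add: outer_mult)

lemma cs1_T: "set cs1 \<subseteq> tangent_V A l v"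
  unfolding cs1_def t1_def t3_def using cs2_K2 t1_T[of 1, simplified] t1_T[of \<i>] t3_T by (auto simp: set_product)

lemma pi1_zero: assumes "y \<in> tangent_V A l v" "(case y of (dA, dl, dw) \<Rightarrow> dA) = 0" shows "y = 0"
proof -
  obtain E e w where yy: "y = (E, e, w)" by (cases y) auto
  have E: "E = 0" using assms(2) yy by simp
  have wv: "cinner w v = 0" and tv: "e *s v + Lm A l *v w = 0" using assms(1) unfolding yy E T_iff by auto
  have tv2: "e *s v + A_lv A l v w + bet A l v w *s v = 0" using tv unfolding Lm_decomp by (simp add: add.assoc)
  have "cinner (e *s v + A_lv A l v w + bet A l v w *s v) v = e + bet A l v w"
    by (simp add: cinner_add_left cinner_scale_left nv Alv_perp)
  hence eb: "e + bet A l v w = 0" using tv2 by simp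
  have "A_lv A l v w = (e *s v + A_lv A l v w + bet A l v w *s v) - (e + bet A l v w) *s v"
    by (simp add: scale_add_left algebra_simps)
  hence "A_lv A l v w = 0" using tv2 eb by simp
  hence w0: "w = 0" using Alv_inj wv unfolding perp_def by blast
  hence "e = 0" using eb by (simp add: bet_def)
  thus ?thesis using yy E w0 by (simp add: zero_prod_def)
qed

lemma K1_eq: "{x \<in> tangent_V A l v. \<forall>y\<in>tangent_V A l v. (case y of (dA, dl, dw) \<Rightarrow> dA) = 0 \<longrightarrow> inner x y = 0}
   = tangent_V A l v"
proof
  show "{x \<in> tangent_V A l v. \<forall>y\<in>tangent_V A l v. (case y of (dA, dl, dw) \<Rightarrow> dA) = 0 \<longrightarrow> inner x y = 0}
     \<subseteq> tangent_V A l v" by blast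
next
  show "tangent_V A l v \<subseteq> {x \<in> tangent_V A l v. \<forall>y\<in>tangent_V A l v. (case y of (dA, dl, dw) \<Rightarrow> dA) = 0 \<longrightarrow> inner x y = 0}"
  proof
    fix x assume x: "x \<in> tangent_V A l v"
    have "\<forall>y\<in>tangent_V A l v. (case y of (dA, dl, dw) \<Rightarrow> dA) = 0 \<longrightarrow> inner x y = 0"
    proof (intro ballI impI)
      fix y assume "y \<in> tangent_V A l v" "(case y of (dA, dl, dw) \<Rightarrow> dA) = 0"
      hence "y = 0" by (rule pi1_zero)
      thus "inner x y = 0" by simp
    qed
    thus "x \<in> {x \<in> tangent_V A l v. \<forall>y\<in>tangent_V A l v. (case y of (dA, dl, dw) \<Rightarrow> dA) = 0 \<longrightarrow> inner x y = 0}"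
      using x by blast
  qed
qed

lemma T_span: "tangent_V A l v \<subseteq> span (set cs1)"
proof
  fix x assume xT: "x \<in> tangent_V A l v"
  obtain dA dl dw where xx: "x = (dA, dl, dw)" by (cases x) auto
  define y where "y = dA *v v"
  have Pm: "dA - outer y v = (\<Sum>k<length us. outer (dA *v us!k) (us!k))"
  proof (rule matrix_eq_mult)
    fix z :: "complex^'n"
    define p where "p = z - cinner z v *s v"
    have "cinner p v = 0" unfolding p_def by (simp add: cinner_diff_left cinner_scale_left nv)
    hence pp: "p \<in> perp v" unfolding perp_def by simp
    have cp: "\<And>k. k < length us \<Longrightarrow> cinner p (us!k) = cinner z (us!k)"
      unfolding p_def using us_perp' nth_mem by (simp add: cinner_diff_left cinner_scale_left)
    have "(\<Sum>k<length us. outer (dA *v us!k) (us!k)) *v z = (\<Sum>k<length us. cinner z (us!k) *s (dA *v us!k))"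
      by (simp add: mv_sum_left outer_mult)
    also have "\<dots> = dA *v (\<Sum>k<length us. cinner p (us!k) *s us!k)"
      by (simp add: mv_sum_right mv_scale_right cp)
    also have "\<dots> = dA *v p" using c_onb_expand[OF U pp] by simp
    also have "\<dots> = (dA - outer y v) *v z"
      unfolding p_def y_def by (simp add: matrix_vector_mult_diff_distrib matrix_vector_mult_diff_rdistrib outer_mult mv_scale_right)
    finally show "(dA - outer y v) *v z = (\<Sum>k<length us. outer (dA *v us!k) (us!k)) *v z" by simp
  qed
  have P_span: "(dA - outer y v, 0, 0) \<in> span (set cs1)"
  proof -
    have "\<And>k. k < length us \<Longrightarrow> (outer (dA *v us!k) (us!k), 0::complex, 0::complex^'n) \<in> span (set cs1)"
    proof -
      fix k assume k: "k < length us"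
      have e: "dA *v us!k = (\<Sum>i<length b0. inner (dA *v us!k) (b0!i) *\<^sub>R b0!i)"
        using onl_expand[OF b0_onl b0_spans] by simp
      have "(outer (dA *v us!k) (us!k), 0::complex, 0::complex^'n)
          = (\<Sum>i<length b0. inner (dA *v us!k) (b0!i) *\<^sub>R (outer (b0!i) (us!k), 0::complex, 0::complex^'n))"
        by (subst e) (simp add: outer_sum_left outer_scaleR_left linear_sum[OF emb1_linear, of _ _ , simplified]
             linear_scale[OF emb1_linear, simplified])
      also have "\<dots> \<in> span (set cs1)"
      proof (intro span_sum span_scale span_base)
        fix i assume "i \<in> {..<length b0}"
        hence "(b0!i, us!k) \<in> set (List.product b0 us)" using k by (auto simp: set_product)
        thus "(outer (b0!i) (us!k), 0::complex, 0::complex^'n) \<in> set cs1" unfolding cs1_def t3_def by force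
      qed
      finally show "(outer (dA *v us!k) (us!k), 0::complex, 0::complex^'n) \<in> span (set cs1)" .
    qed
    hence "(\<Sum>k<length us. (outer (dA *v us!k) (us!k), 0::complex, 0::complex^'n)) \<in> span (set cs1)"
      by (intro span_sum) auto
    moreover have "(\<Sum>k<length us. (outer (dA *v us!k) (us!k), 0::complex, 0::complex^'n)) = (dA - outer y v, 0, 0)"
      unfolding Pm by (simp add: linear_sum[OF emb1_linear, simplified])
    ultimately show ?thesis by simp
  qed
  have dwp: "dw \<in> perp v" using xT unfolding xx T_iff perp_def by simp
  have H_span: "hh A l v dw \<in> span (set cs1)"
  proof -
    have "hh A l v dw \<in> span (set cs2)" using hh_K2[OF dwp] K2_span by blast
    moreover have "set cs2 \<subseteq> set cs1" unfolding cs1_def by auto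
    ultimately show ?thesis using span_mono by blast
  qed
  define r where "r = x - (dA - outer y v, 0, 0) - hh A l v dw"
  have rT: "r \<in> tangent_V A l v"
  proof -
    have P: "(dA - outer y v, 0, 0) \<in> tangent_V A l v"
      unfolding T_iff y_def by (simp add: matrix_vector_mult_diff_rdistrib outer_mult nv)
    have "x - (dA - outer y v, 0, 0) \<in> tangent_V A l v" by (rule subspace_diff[OF T_subspace xT P])
    thus ?thesis unfolding r_def by (rule subspace_diff[OF T_subspace _ hh_T[OF dwp]])
  qed
  obtain y' e where r': "r = (outer y' v, e, 0)"
    unfolding r_def xx hh_def by (simp add: outer_diff_left[symmetric])
  have "e *s v - y' = 0" using rT unfolding r' T_iff by (simp add: outer_mult nv)
  hence "y' = e *s v" by simp
  hence "r = Re e *\<^sub>R t1!0 + Im e *\<^sub>R t1!1"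
    unfolding r' t1_def by (simp add: scale_decomp[of e] outer_add_left outer_scaleR_left complex_decomp[symmetric])
  moreover have "t1!0 \<in> set cs1" "t1!1 \<in> set cs1" unfolding cs1_def t1_def by auto
  ultimately have "r \<in> span (set cs1)" by (simp add: span_add span_scale span_base)
  moreover have "x = (dA - outer y v, 0, 0) + hh A l v dw + r" unfolding r_def by simp
  ultimately show "x \<in> span (set cs1)" using P_span H_span by (simp add: span_add)
qed

end

lemma gram_det_coeff:
  assumes "onl bs" "length cs = length bs"
    and exp: "\<And>j. j < length cs \<Longrightarrow> cs!j = (\<Sum>i<length bs. inner (cs!j) (bs!i) *\<^sub>R bs!i)"
  shows "det (gram cs) = det (Matrix.mat (length bs) (length bs) (\<lambda>(i,j). inner (cs!j) (bs!i)))
     * det (Matrix.mat (length bs) (length bs) (\<lambda>(i,j). inner (cs!j) (bs!i)))"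
proof -
  let ?m = "length bs"
  let ?C = "Matrix.mat ?m ?m (\<lambda>(i,j). inner (cs!j) (bs!i))"
  have Cc: "?C \<in> carrier_mat ?m ?m" by simp
  have "gram (map id cs) = transpose_mat ?C * gram (map id bs) * ?C"
    by (rule gram_change[OF assms(1,2) exp linear_id])
  moreover have "transpose_mat ?C * 1\<^sub>m ?m = transpose_mat ?C" using Cc by (simp add: right_mult_one_mat)
  ultimately have "gram cs = transpose_mat ?C * ?C" unfolding list.map_id gram_onl[OF assms(1)] by simp
  thus ?thesis using Cc by (simp add: det_mult[of _ ?m] det_transpose[OF Cc])
qed

lemma gram_append_orth':
  assumes "\<And>x y. x \<in> set xs \<Longrightarrow> y \<in> set ys \<Longrightarrow> inner x y = 0"
  shows "det (gram (xs @ ys)) = det (gram xs) * det (gram ys)"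
  by (rule gram_append_orth) (simp add: assms)

context EPU begin

definition "Yf d = A_lv A l v d + (bet A l v d / 2) *s v"
definition "xv = [v, \<i> *s v] @ map Yf ds"
definition "Dm = Matrix.mat (length ds) (length ds) (\<lambda>(i,j). inner (A_lv A l v (ds!j)) (ds!i))"

lemma hh_Yf: "hh A l v d = (outer (Yf d) v, - (bet A l v d / 2), d)"
  unfolding hh_def Yf_def ..

lemma cinner_Yf_v: "cinner (Yf d) v = bet A l v d / 2"
  unfolding Yf_def by (simp add: cinner_add_left cinner_scale_left Alv_perp nv)

lemma t3_set: "x \<in> set t3 \<Longrightarrow> \<exists>z u. u \<in> set us \<and> z \<in> set b0 \<and> x = (outer z u, 0, 0)"
  unfolding t3_def by (auto simp: set_product)

lemma t1_set: "x \<in> set t1 \<Longrightarrow> \<exists>e. x = (outer (e *s v) v, e, 0)"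
  unfolding t1_def by auto

lemma cs2_set: "x \<in> set cs2 \<Longrightarrow> \<exists>d. d \<in> set ds \<and> x = (outer (Yf d) v, - (bet A l v d / 2), d)"
  unfolding cs2_def hh_Yf by auto

lemma outer_v_t3_orth: "u \<in> set us \<Longrightarrow> inner (outer w v) (outer z u) = 0"
  by (simp add: inner_outer_outer us_perp)

lemma t1_cs2_orth: "x \<in> set t1 \<Longrightarrow> y \<in> set cs2 \<Longrightarrow> inner x y = 0"
proof -
  assume "x \<in> set t1" "y \<in> set cs2"
  then obtain e d where x: "x = (outer (e *s v) v, e, 0)" and y: "y = (outer (Yf d) v, - (bet A l v d / 2), d)"
    using t1_set cs2_set by blast
  have "inner x y = Re (cinner (e *s v) (Yf d)) + Re (e * cnj (- (bet A l v d / 2)))"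
    unfolding x y by (simp add: inner_outer_outer nv inner_complex_Re)
  also have "cinner (e *s v) (Yf d) = e * cnj (bet A l v d / 2)"
    by (simp add: cinner_scale_left cinner_commute[of v] cinner_Yf_v)
  finally show "inner x y = 0" by simp
qed

lemma t1_t3_orth: "x \<in> set t1 \<Longrightarrow> y \<in> set t3 \<Longrightarrow> inner x y = 0"
  using t1_set t3_set outer_v_t3_orth by fastforce

lemma cs2_t3_orth: "x \<in> set cs2 \<Longrightarrow> y \<in> set t3 \<Longrightarrow> inner x y = 0"
  using cs2_set t3_set outer_v_t3_orth by fastforce

lemma b0_value: "z \<in> set b0 \<Longrightarrow> z' \<in> set b0 \<Longrightarrow> Re (cinner z z') = (if z = z' then 1 else 0)"
  using onl_value[OF b0_onl] by (simp add: cinner_Re)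

lemma distinct_b0: "distinct b0" using lfree_distinct[OF onl_lfree[OF b0_onl]] .

lemma onl_outer_t3: "onl (map (\<lambda>(z,u). outer z u) (List.product b0 us))"
proof (rule onl_map_distinct)
  show "distinct (List.product b0 us)" using distinct_b0 c_onb_distinct[OF U] by (simp add: distinct_product)
next
  fix p q assume pq: "p \<in> set (List.product b0 us)" "q \<in> set (List.product b0 us)"
  obtain z u z' u' where pp: "p = (z,u)" "q = (z',u')" by (cases p; cases q) auto
  have m: "z \<in> set b0" "u \<in> set us" "z' \<in> set b0" "u' \<in> set us" using pq pp by auto
  show "inner ((\<lambda>(z,u). outer z u) p) ((\<lambda>(z,u). outer z u) q) = (if p = q then 1 else 0)"
    unfolding pp using c_onb_value[OF U m(4) m(2)] b0_value[OF m(1) m(3)]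
    by (auto simp: inner_outer_outer)
qed

lemma onl_t3: "onl t3"
proof -
  have "t3 = map (\<lambda>M. (M, 0::complex, 0::complex^'n)) (map (\<lambda>(z,u). outer z u) (List.product b0 us))"
    unfolding t3_def by (simp add: case_prod_beta)
  thus ?thesis using onl_outer_t3 unfolding onl_def by simp
qed

lemma pi1_t3: "map (\<lambda>(dA, dl, dw). dA) t3 = map (\<lambda>(z,u). outer z u) (List.product b0 us)"
  unfolding t3_def by (simp add: case_prod_beta)

lemma gram_t1: "det (gram t1) = 4"
proof -
  have "gram t1 = 2 \<cdot>\<^sub>m 1\<^sub>m 2"
  proof (rule eq_matI)
    fix i j assume "i < dim_row (2 \<cdot>\<^sub>m 1\<^sub>m 2 :: real mat)" "j < dim_col (2 \<cdot>\<^sub>m 1\<^sub>m 2 :: real mat)"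
    hence "i = 0 \<or> i = 1" "j = 0 \<or> j = 1" by auto
    thus "gram t1 $$ (i, j) = (2 \<cdot>\<^sub>m 1\<^sub>m 2 :: real mat) $$ (i, j)"
      by (auto simp: gram_def t1_def inner_outer_outer nv cinner_scale_left cinner_scale_right inner_complex_Re)
  qed (auto simp: gram_def t1_def)
  thus ?thesis by simp
qed

lemma gram_cs1: "det (gram cs1) = 4 * det (gram cs2)"
proof -
  have "det (gram cs1) = det (gram t1) * det (gram (cs2 @ t3))"
    unfolding cs1_def by (rule gram_append_orth') (auto dest: t1_cs2_orth t1_t3_orth)
  also have "det (gram (cs2 @ t3)) = det (gram cs2) * det (gram t3)"
    by (rule gram_append_orth') (rule cs2_t3_orth)
  finally show ?thesis by (simp add: gram_t1 gram_onl[OF onl_t3])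
qed

lemma pi1_t1_cs2: "map (\<lambda>(dA, dl, dw). dA) (t1 @ cs2) = map (\<lambda>w. outer w v) xv"
  unfolding t1_def cs2_def xv_def hh_Yf by simp

lemma gram_outer_xv: "gram (map (\<lambda>w. outer w v) xv) = gram xv"
  unfolding gram_def by (intro eq_matI) (auto simp: inner_outer_outer nv cinner_Re)

lemma pi1_cs1: "map (\<lambda>(dA, dl, dw). dA) cs1 = map (\<lambda>w. outer w v) xv @ map (\<lambda>(z,u). outer z u) (List.product b0 us)"
  unfolding cs1_def using pi1_t1_cs2 pi1_t3 by (metis append_assoc map_append)

lemma gram_pi1_cs1: "det (gram (map (\<lambda>(dA, dl, dw). dA) cs1)) = det (gram xv)"
proof -
  have "det (gram (map (\<lambda>(dA, dl, dw). dA) cs1)) = det (gram (map (\<lambda>w. outer w v) xv)) * det (gram (map (\<lambda>(z,u). outer z u) (List.product b0 us)))"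
    unfolding pi1_cs1 by (rule gram_append_orth') (auto simp: set_product outer_v_t3_orth)
  thus ?thesis by (simp add: gram_outer_xv gram_onl[OF onl_outer_t3])
qed

end

context EP begin
lemma Alv_linear: "linear (A_lv A l v)"
  by (rule linearI) (simp_all add: Alv_add Alv_scaleR)
end

context EPU begin

definition "Mm = Matrix.mat (length us) (length us) (\<lambda>(i,j). cinner (A_lv A l v (us!j)) (us!i))"

lemma len_b0: "length b0 = 2 + length ds" unfolding b0_def by simp
lemma len_xv: "length xv = 2 + length ds" unfolding xv_def by simp

lemma xv_b0: "j < 2 \<Longrightarrow> xv!j = b0!j"
  unfolding xv_def b0_def using less_2_cases[of j] by auto
lemma xv_ds: "j \<ge> 2 \<Longrightarrow> j < 2 + length ds \<Longrightarrow> xv!j = Yf (ds!(j-2))"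
  unfolding xv_def by (simp add: nth_append numeral_2_eq_2)
lemma b0_ds: "i \<ge> 2 \<Longrightarrow> i < 2 + length ds \<Longrightarrow> b0!i = ds!(i-2)"
  unfolding b0_def by (simp add: nth_append numeral_2_eq_2)

lemma inner_Yf: "d' \<in> set ds \<Longrightarrow> inner (Yf d) d' = inner (A_lv A l v d) d'"
  unfolding Yf_def by (simp add: cinner_Re cinner_add_left cinner_scale_left ds_perp')

lemma gram_xv: "det (gram xv) = det Dm * det Dm"
proof -
  let ?n = "length ds"
  let ?C = "Matrix.mat (length b0) (length b0) (\<lambda>(i,j). inner (xv!j) (b0!i))"
  have exp: "\<And>j. j < length xv \<Longrightarrow> xv!j = (\<Sum>i<length b0. inner (xv!j) (b0!i) *\<^sub>R b0!i)"
    using onl_expand[OF b0_onl b0_spans] by simp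
  have g: "det (gram xv) = det ?C * det ?C"
    by (rule gram_det_coeff[OF b0_onl _ exp]) (simp add: len_b0 len_xv)
  define Bm where "Bm = Matrix.mat 2 ?n (\<lambda>(i,j). inner (xv!(j+2)) (b0!i))"
  have oo: "\<And>i j. i < length b0 \<Longrightarrow> j < length b0 \<Longrightarrow> inner (b0!j) (b0!i) = (if j = i then 1 else 0)"
    using b0_onl unfolding onl_def by blast
  have "?C = four_block_mat (1\<^sub>m 2) Bm (0\<^sub>m ?n 2) Dm"
  proof (rule eq_matI)
    fix i j assume "i < dim_row (four_block_mat (1\<^sub>m 2) Bm (0\<^sub>m ?n 2) Dm)" "j < dim_col (four_block_mat (1\<^sub>m 2) Bm (0\<^sub>m ?n 2) Dm)"
    hence ij: "i < 2 + ?n" "j < 2 + ?n" by (auto simp: Dm_def Bm_def)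
    show "?C $$ (i, j) = four_block_mat (1\<^sub>m 2) Bm (0\<^sub>m ?n 2) Dm $$ (i, j)"
    proof (cases "i < 2"; cases "j < 2")
      assume "i < 2" "j < 2" thus ?thesis using ij oo[of i j] by (simp add: len_b0 xv_b0 Bm_def Dm_def)
    next
      assume a: "i < 2" "\<not> j < 2"
      hence "Suc (Suc (j - 2)) = j" by arith
      thus ?thesis using ij a by (simp add: len_b0 Bm_def Dm_def)
    next
      assume "\<not> i < 2" "j < 2" thus ?thesis using ij oo[of i j] by (simp add: len_b0 xv_b0 Bm_def Dm_def)
    next
      assume a: "\<not> i < 2" "\<not> j < 2"
      have "ds!(i-2) \<in> set ds" using ij a by simp
      thus ?thesis using ij a by (simp add: len_b0 xv_ds b0_ds Bm_def Dm_def inner_Yf)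
    qed
  qed (auto simp: len_b0 Dm_def Bm_def)
  hence "det ?C = det Dm"
    by (simp add: det_four_block_mat_lower_left_zero[of _ 2 _ ?n] Bm_def Dm_def)
  thus ?thesis using g by simp
qed

lemma det_Dm_nz: "det Dm \<noteq> 0"
proof
  let ?n = "length ds"
  have Dc: "Dm \<in> carrier_mat ?n ?n" by (simp add: Dm_def)
  assume "det Dm = 0"
  then obtain w where w: "w \<in> carrier_vec ?n" "w \<noteq> 0\<^sub>v ?n" "Dm *\<^sub>v w = 0\<^sub>v ?n"
    using det_0_iff_vec_prod_zero_field[OF Dc] by blast
  define x where "x = (\<Sum>j<?n. (w $ j) *\<^sub>R ds!j)"
  have xp: "x \<in> perp v"
  proof -
    have "subspace (perp v)" using csub_perp unfolding csub_def by blast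
    thus ?thesis unfolding x_def using ds_props(2) by (intro subspace_sum subspace_scale) auto
  qed
  have Ax: "A_lv A l v x = (\<Sum>j<?n. (w $ j) *\<^sub>R A_lv A l v (ds!j))"
    unfolding x_def using Alv_linear by (simp add: linear_sum linear_scale)
  have "\<And>i. i < ?n \<Longrightarrow> inner (A_lv A l v x) (ds!i) = 0"
  proof -
    fix i assume i: "i < ?n"
    have "inner (A_lv A l v x) (ds!i) = (\<Sum>j<?n. Dm $$ (i,j) * w $ j)"
      unfolding Ax by (simp add: inner_sum_left Dm_def i mult.commute)
    also have "\<dots> = (Dm *\<^sub>v w) $ i" by (rule mult_mat_vec_entry[OF Dc w(1) i, symmetric])
    also have "\<dots> = 0" using w(3) i by simp
    finally show "inner (A_lv A l v x) (ds!i) = 0" .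
  qed
  moreover have "A_lv A l v x = (\<Sum>i<?n. inner (A_lv A l v x) (ds!i) *\<^sub>R ds!i)"
    by (rule onl_expand[OF ds_props(1) ds_props(3) Alv_perp'])
  ultimately have "A_lv A l v x = 0" by simp
  hence "x = 0" using Alv_inj xp by blast
  hence "\<forall>j<?n. w $ j = 0" using lfreeD[OF onl_lfree[OF ds_props(1)], of "\<lambda>j. w $ j"] unfolding x_def by blast
  hence "w = 0\<^sub>v ?n" using w(1) by (intro eq_vecI) auto
  thus False using w(2) by simp
qed

lemma cs1_lfree: "lfree cs1"
proof (rule lfree_map[OF lin_pi1])
  show "lfree (map (\<lambda>(dA, dl, dw). dA) cs1)"
    by (rule gram_lfree) (simp add: gram_pi1_cs1 gram_xv det_Dm_nz)
qed

lemma NJ1: "NJ_pi A l v = sqrt (det Dm * det Dm / (4 * det (gram cs2)))"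
proof -
  have "det (gram cs1) > 0 \<and> normal_jacobian (\<lambda>(dA, dl, dw). dA) (tangent_V A l v)
      = sqrt (det (gram (map (\<lambda>(dA, dl, dw). dA) cs1)) / det (gram cs1))"
    by (rule NJ_formula[OF lin_pi1 T_subspace]) (simp_all add: K1_eq cs1_T T_span cs1_lfree)
  thus ?thesis unfolding NJ_pi_def gram_pi1_cs1 gram_xv gram_cs1 by simp
qed

lemma Dm_block: "Dm = four_block_mat (map_mat Re Mm) (- map_mat Im Mm) (map_mat Im Mm) (map_mat Re Mm)"
proof (rule eq_matI)
  let ?m = "length us"
  fix i j assume "i < dim_row (four_block_mat (map_mat Re Mm) (- map_mat Im Mm) (map_mat Im Mm) (map_mat Re Mm))"
    "j < dim_col (four_block_mat (map_mat Re Mm) (- map_mat Im Mm) (map_mat Im Mm) (map_mat Re Mm))"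
  hence ij: "i < ?m + ?m" "j < ?m + ?m" by (auto simp: Mm_def)
  show "Dm $$ (i, j) = four_block_mat (map_mat Re Mm) (- map_mat Im Mm) (map_mat Im Mm) (map_mat Re Mm) $$ (i, j)"
    using ij
    by (auto simp: Dm_def Mm_def ds_def nth_append cinner_Re Alv_scale cinner_scale_left cinner_scale_right len_ds)
qed (auto simp: Dm_def Mm_def len_ds)

lemma det_Dm: "det Dm = (cmod (det Mm))^2"
  unfolding Dm_block by (rule realify_det[of Mm "length us"]) (simp add: Mm_def)

lemma ratio: "NJ_pi A l v / NJ_pi2 A l v = 1/2 * (cmod (det Mm))^2"
proof -
  let ?G = "det (gram cs2)"
  have G: "?G > 0" using NJ2 by blast
  have "NJ_pi A l v / NJ_pi2 A l v = sqrt (det Dm * det Dm / (4 * ?G)) / sqrt (1 / ?G)"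
    using NJ1 NJ2 by simp
  also have "\<dots> = sqrt (det Dm * det Dm / (4 * ?G) / (1 / ?G))" by (rule real_sqrt_divide[symmetric])
  also have "det Dm * det Dm / (4 * ?G) / (1 / ?G) = (det Dm / 2) * (det Dm / 2)" using G by (simp add: field_simps)
  also have "sqrt ((det Dm / 2) * (det Dm / 2)) = \<bar>det Dm / 2\<bar>" by (rule real_sqrt_abs2)
  finally have "NJ_pi A l v / NJ_pi2 A l v = \<bar>det Dm / 2\<bar>" .
  thus ?thesis unfolding det_Dm by simp
qed

end

lemma cinner_adj: "cinner (M *v x) y = cinner x (cadjoint M *v y)"
  unfolding cinner_def matrix_vector_mult_def cadjoint_def
  apply (simp add: sum_distrib_left sum_distrib_right)
  apply (subst sum.swap)
  by (simp add: mult_ac)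

lemma cadjoint_cadjoint: "cadjoint (cadjoint M) = M"
  unfolding cadjoint_def by (simp add: Finite_Cartesian_Product.vec_eq_iff)

lemma mv_id: "Finite_Cartesian_Product.mat 1 *v x = (x::complex^'n)"
  by simp

context
  fixes U :: "complex^'n^'n"
  assumes U: "unitary U"
begin

lemma UU: "cadjoint U *v (U *v x) = x" "U *v (cadjoint U *v x) = x"
  using U unfolding unitary_def by (simp_all add: matrix_vector_mul_assoc)

lemma U_cinner: "cinner (U *v x) (U *v y) = cinner x y"
  by (simp add: cinner_adj UU)

lemma Ua_cinner: "cinner (cadjoint U *v x) (cadjoint U *v y) = cinner x y"
  by (simp add: cinner_adj cadjoint_cadjoint UU)

lemma U_perp: "cinner x (U *v v) = cinner (cadjoint U *v x) v"
proof -
  have "cinner x (U *v v) = cnj (cinner (U *v v) x)" by (rule cinner_commute)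
  also have "cinner (U *v v) x = cinner v (cadjoint U *v x)" by (rule cinner_adj)
  also have "cnj (cinner v (cadjoint U *v x)) = cinner (cadjoint U *v x) v" by (rule cinner_commute[symmetric])
  finally show ?thesis .
qed

lemma U_Lm: "Lm (U ** A ** cadjoint U) l *v (U *v x) = U *v (Lm A l *v x)"
  by (simp add: matrix_vector_mult_diff_rdistrib matrix_vector_mult_diff_distrib mat_mult mv_scale_right
      UU matrix_vector_mul_assoc[symmetric])

lemma U_Alv: "A_lv (U ** A ** cadjoint U) l (U *v v) (U *v x) = U *v (A_lv A l v x)"
  unfolding A_lv_def proj_perp_def
  by (simp add: U_Lm U_cinner matrix_vector_mult_diff_distrib mv_scale_right)

lemma U_Alv': "A_lv (U ** A ** cadjoint U) l (U *v v) y = U *v (A_lv A l v (cadjoint U *v y))"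
  using U_Alv[where x="cadjoint U *v y"] by (simp add: UU)

lemma U_perp_iff: "y \<in> perp (U *v v) \<longleftrightarrow> cadjoint U *v y \<in> perp v"
  unfolding perp_def by (simp add: U_perp)

lemma U_bij: "bij_betw ((*v) U) (perp v) (perp (U *v v))"
proof (rule bij_betw_byWitness[where f'="(*v) (cadjoint U)"])
  show "\<forall>a\<in>perp v. cadjoint U *v (U *v a) = a" by (simp add: UU)
  show "\<forall>a\<in>perp (U *v v). U *v (cadjoint U *v a) = a" by (simp add: UU)
  show "(*v) U ` perp v \<subseteq> perp (U *v v)" by (auto simp: U_perp_iff UU)
  show "(*v) (cadjoint U) ` perp (U *v v) \<subseteq> perp v" by (auto simp: U_perp_iff)
qed

lemma U_bij': "bij_betw ((*v) (cadjoint U)) (perp (U *v v)) (perp v)"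
proof (rule bij_betw_byWitness[where f'="(*v) U"])
  show "\<forall>a\<in>perp (U *v v). U *v (cadjoint U *v a) = a" by (simp add: UU)
  show "\<forall>a\<in>perp v. cadjoint U *v (U *v a) = a" by (simp add: UU)
  show "(*v) U ` perp v \<subseteq> perp (U *v v)" by (auto simp: U_perp_iff UU)
  show "(*v) (cadjoint U) ` perp (U *v v) \<subseteq> perp v" by (auto simp: U_perp_iff)
qed

lemma U_W: assumes "in_W A l v" shows "in_W (U ** A ** cadjoint U) l (U *v v)"
proof -
  have nv: "cinner v v = 1" using assms unfolding in_W_def in_V_def by (simp add: cinner_self)
  have "cinner (U *v v) (U *v v) = 1" using nv by (simp add: U_cinner)
  hence "of_real ((norm (U *v v))^2) = (1::complex)" by (simp add: cinner_self)
  hence "(norm (U *v v))^2 = 1" by (metis of_real_eq_1_iff)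
  hence "norm (U *v v) = 1 \<or> norm (U *v v) = -1" by (simp add: power2_eq_1_iff)
  hence n1: "norm (U *v v) = 1" using norm_ge_zero[of "U *v v"] by linarith
  have "Lm (U ** A ** cadjoint U) l *v (U *v v) = 0"
    using assms unfolding U_Lm in_W_def in_V_def by simp
  hence V: "in_V (U ** A ** cadjoint U) l (U *v v)" unfolding in_V_def using n1 by simp
  have b0: "bij_betw (A_lv A l v) (perp v) (perp v)" using assms unfolding in_W_def by blast
  have "bij_betw ((*v) U \<circ> (A_lv A l v \<circ> (*v) (cadjoint U))) (perp (U *v v)) (perp (U *v v))"
    by (rule bij_betw_trans[OF bij_betw_trans[OF U_bij' b0] U_bij])
  moreover have "\<And>y. ((*v) U \<circ> (A_lv A l v \<circ> (*v) (cadjoint U))) y = A_lv (U ** A ** cadjoint U) l (U *v v) y"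
    by (simp add: U_Alv')
  ultimately have "bij_betw (A_lv (U ** A ** cadjoint U) l (U *v v)) (perp (U *v v)) (perp (U *v v))"
    using bij_betw_cong[of "perp (U *v v)" "(*v) U \<circ> (A_lv A l v \<circ> (*v) (cadjoint U))" "A_lv (U ** A ** cadjoint U) l (U *v v)"]
    by blast
  thus ?thesis using V unfolding in_W_def by simp
qed

lemma U_onb: assumes "c_onb (perp (U *v v)) us" shows "c_onb (perp v) (map ((*v) (cadjoint U)) us)"
  unfolding c_onb_def
proof (intro conjI allI impI ballI)
  fix i j assume "i < length (map ((*v) (cadjoint U)) us)" "j < length (map ((*v) (cadjoint U)) us)"
  thus "cinner (map ((*v) (cadjoint U)) us ! i) (map ((*v) (cadjoint U)) us ! j) = (if i = j then 1 else 0)"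
    using assms unfolding c_onb_def by (simp add: Ua_cinner)
next
  show "set (map ((*v) (cadjoint U)) us) \<subseteq> perp v"
    using assms unfolding c_onb_def by (auto simp: U_perp_iff)
next
  fix x assume "x \<in> perp v"
  hence "U *v x \<in> perp (U *v v)" by (simp add: U_perp_iff UU)
  then obtain c where c: "U *v x = (\<Sum>i<length us. c i *s us!i)" using assms unfolding c_onb_def by blast
  have "x = cadjoint U *v (U *v x)" by (simp add: UU)
  also have "\<dots> = (\<Sum>i<length us. c i *s (cadjoint U *v us!i))" unfolding c by (simp add: mv_sum_right mv_scale_right)
  finally show "\<exists>c. x = (\<Sum>i<length (map ((*v) (cadjoint U)) us). c i *s map ((*v) (cadjoint U)) us ! i)"
    by (intro exI[of _ c]) simp
qed

end

lemma EPU_I: "in_W A l v \<Longrightarrow> c_onb (perp v) us \<Longrightarrow> EPU A l v us"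
  by (intro EPU.intro EP.intro EPU_axioms.intro)

lemma det_on_Mm: "EPU A l v (SOME us. c_onb (perp v) us) \<Longrightarrow>
    det_on (A_lv A l v) (perp v) = det (EPU.Mm A l v (SOME us. c_onb (perp v) us))"
  unfolding det_on_def Let_def det_nat_det by (simp add: EPU.Mm_def)

lemma part1: assumes "in_W A l v"
  shows "NJ_pi A l v / NJ_pi2 A l v = 1/2 * (cmod (det_on (A_lv A l v) (perp v)))^2"
proof -
  have h: "c_onb (perp v) (SOME us. c_onb (perp v) us)"
    using c_onb_exists[OF csub_perp] by (rule someI_ex)
  from EPU.ratio[OF EPU_I[OF assms h]] show ?thesis unfolding det_on_Mm[OF EPU_I[OF assms h]] .
qed

theorem mainTheorem13:
  fixes A :: "complex^'n^'n" and l :: complex and v :: "complex^'n"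
  assumes "in_W A l v"
  shows "NJ_pi A l v / NJ_pi2 A l v = 1/2 * (cmod (det_on (A_lv A l v) (perp v)))^2
         \<and> (\<forall>U. unitary U \<longrightarrow>
              NJ_pi (U ** A ** cadjoint U) l (U *v v) / NJ_pi2 (U ** A ** cadjoint U) l (U *v v)
              = NJ_pi A l v / NJ_pi2 A l v)"
proof (intro conjI allI impI)
  show "NJ_pi A l v / NJ_pi2 A l v = 1/2 * (cmod (det_on (A_lv A l v) (perp v)))^2"
    by (rule part1[OF assms])
next
  fix U :: "complex^'n^'n" assume U: "unitary U"
  let ?A = "U ** A ** cadjoint U" and ?v = "U *v v"
  define us where "us = (SOME us. c_onb (perp ?v) us)"
  have us: "c_onb (perp ?v) us" unfolding us_def using c_onb_exists[OF csub_perp] by (rule someI_ex)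
  have W': "in_W ?A l ?v" by (rule U_W[OF U assms])
  have us2: "c_onb (perp v) (map ((*v) (cadjoint U)) us)" by (rule U_onb[OF U us])
  have r1: "NJ_pi ?A l ?v / NJ_pi2 ?A l ?v = 1/2 * (cmod (det (EPU.Mm ?A l ?v us)))^2"
    by (rule EPU.ratio[OF EPU_I[OF W' us]])
  have r2: "NJ_pi A l v / NJ_pi2 A l v = 1/2 * (cmod (det (EPU.Mm A l v (map ((*v) (cadjoint U)) us))))^2"
    by (rule EPU.ratio[OF EPU_I[OF assms us2]])
  have e: "EPU.Mm A l v (map ((*v) (cadjoint U)) us) = EPU.Mm ?A l ?v us"
    unfolding EPU.Mm_def[OF EPU_I[OF assms us2]] EPU.Mm_def[OF EPU_I[OF W' us]]
    by (intro eq_matI) (auto simp: U_Alv'[OF U] cinner_adj)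
  show "NJ_pi ?A l ?v / NJ_pi2 ?A l ?v = NJ_pi A l v / NJ_pi2 A l v" unfolding r1 r2 e ..
qed

end
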